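(* Let $\mathfrak{F}$ be an assignment to every finite-dimensional quantum system $A$ of a set $\mathfrak{F}(A)$ of density matrices on $A$ (the free states), such that the family of free states is closed under tensor products, partial traces, and permutations (swaps) of subsystems. Then the Choi-defined (CD) operations associated with $\mathfrak{F}$ form a resource theory — i.e., for all systems the identity channel, the swap channel, and the discarding channel (partial trace) are CD operations, and sequential and parallel compositions of CD operations are CD operations — if and only if for all systems $A$ and $B$: (1) the state $\frac{1}{d_A}\Phi_{AA'}$ belongs to $\mathfrak{F}(AA')$; and (2) whenever $\rho_A\in\mathfrak{F}(A)$ and $\mu_{BA'}\in\mathfrak{F}(BA')$ with $\mu_{BA'}$ the renormalized Choi matrix of a quantum channel (i.e. $\operatorname{tr}_B\mu_{BA'}=\frac{1}{d_A}\mathbb{1}_{A'}$), the state $d_A\,\mu_{B:A'}*\rho_A=d_A\operatorname{tr}_A[\mu_{BA}(\mathbb{1}_B\otimes\rho_A^{T})]$ belongs to $\mathfrak{F}(B)$.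
   Context: Systems are finite-dimensional Hilbert spaces; $d_A$ is the dimension of $A$ and $A'$ is a copy of $A$. Fix an orthonormal basis $\{|x\rangle_A\}$ of each system; the unnormalized Choi state is $\Phi_{AA'}=\sum_{x,y}|x\rangle\langle y|_A\otimes|x\rangle\langle y|_{A'}$. The Choi matrix of a channel $\mathcal{M}_{A\to B}$ is $M_{B:A'}=(\mathcal{M}_{A\to B}\otimes\mathcal{I}_{A'})(\Phi_{AA'})$ (output system first, input copy second), and its renormalized Choi matrix is $\mu_{B:A'}=\frac{1}{d_A}M_{B:A'}$, a state with $\operatorname{tr}_B\mu_{BA'}=\frac1{d_A}\mathbb{1}_{A'}$; conversely such a state determines the channel $\mathcal{M}_{A\to B}(\rho_A)=d_A\operatorname{tr}_A[\mu_{BA}(\mathbb{1}_B\otimes\rho_A^T)]$, with $T$ the transpose in the fixed basis. The link product is $N_{C:B'}*M_{B:A'}=\operatorname{tr}_{BB'}[(N_{C:B'}\otimes M_{B:A'})(\mathbb{1}_C\otimes\Phi_{B'B}\otimes\mathbb{1}_{A'})]$; for a state $\rho_A$ (viewed as Choi matrix of a preparation) $M_{B:A'}*\rho_A=\operatorname{tr}_A[M_{B:A}(\mathbb{1}_B\otimes\rho_A^T)]$. A channel $\mathcal{M}_{A\to B}$ is a Choi-defined (CD) operation associated with $\mathfrak{F}$ if its renormalized Choi matrix lies in $\mathfrak{F}(BA')$; states are regarded as channels from the trivial one-dimensional system, whose renormalized Choi matrix is the state itself. A Choi-defined resource theory (CDRT) is a resource theory whose free operations are exactly the CD operations associated with its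 free states. *)

theory Defs
  imports "Jordan_Normal_Form.Matrix" "Jordan_Normal_Form.Conjugate"
begin

text \<open>A (possibly composite) finite-dimensional quantum system is modelled as the list
 of dimensions of its elementary tensor factors; the composite system AB is the list
 concatenation A @ B, the trivial system is the empty list (dimension 1), and a copy A' of A
 is the same list A. Indices of a composite system are ordered lexicographically
 (Kronecker convention: index of (i,k) in AB is i * d_B + k).\<close>

type_synonym sys = "nat list"

definition is_sys :: "sys \<Rightarrow> bool" where
  "is_sys A \<longleftrightarrow> (\<forall>d\<in>set A. 0 < d)"

definition dim :: "sys \<Rightarrow> nat" where
  "dim A = prod_list A"

definition mtrace :: "complex mat \<Rightarrow> complex" where
  "mtrace X = (\<Sum>i<dim_row X. X $$ (i, i))"

definition psd :: "nat \<Rightarrow> complex mat \<Rightarrow> bool" where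
  "psd n X \<longleftrightarrow> X \<in> carrier_mat n n \<and>
     (\<forall>v\<in>carrier_vec n. Im (conjugate v \<bullet> (X *\<^sub>v v)) = 0 \<and> 0 \<le> Re (conjugate v \<bullet> (X *\<^sub>v v)))"

definition density :: "nat \<Rightarrow> complex mat \<Rightarrow> bool" where
  "density n X \<longleftrightarrow> psd n X \<and> mtrace X = 1"

definition kron :: "complex mat \<Rightarrow> complex mat \<Rightarrow> complex mat" where
  "kron X Y = mat (dim_row X * dim_row Y) (dim_col X * dim_col Y)
     (\<lambda>(i, j). X $$ (i div dim_row Y, j div dim_col Y) * Y $$ (i mod dim_row Y, j mod dim_col Y))"

definition ptrace_snd :: "nat \<Rightarrow> nat \<Rightarrow> complex mat \<Rightarrow> complex mat" where
  "ptrace_snd d1 d2 X = mat d1 d1 (\<lambda>(i, j). \<Sum>k<d2. X $$ (i * d2 + k, j * d2 + k))"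

definition ptrace_fst :: "nat \<Rightarrow> nat \<Rightarrow> complex mat \<Rightarrow> complex mat" where
  "ptrace_fst d1 d2 X = mat d2 d2 (\<lambda>(k, l). \<Sum>i<d1. X $$ (i * d2 + k, i * d2 + l))"

definition swap_mat :: "nat \<Rightarrow> nat \<Rightarrow> complex mat \<Rightarrow> complex mat" where
  "swap_mat d1 d2 X = mat (d2 * d1) (d2 * d1)
     (\<lambda>(r, s). X $$ ((r mod d1) * d2 + r div d1, (s mod d1) * d2 + s div d1))"

definition swap_idx :: "nat \<Rightarrow> nat \<Rightarrow> nat \<Rightarrow> nat \<Rightarrow> nat" where
  "swap_idx dB dC dD r =
     (let d = r mod dD; t = r div dD; b = t mod dB; t2 = t div dB; c = t2 mod dC; a = t2 div dC
      in ((a * dB + b) * dC + c) * dD + d)"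

definition swap_mid :: "nat \<Rightarrow> nat \<Rightarrow> nat \<Rightarrow> nat \<Rightarrow> complex mat \<Rightarrow> complex mat" where
  "swap_mid dA dB dC dD X = mat (dA * dC * dB * dD) (dA * dC * dB * dD)
     (\<lambda>(r, s). X $$ (swap_idx dB dC dD r, swap_idx dB dC dD s))"

definition munit :: "nat \<Rightarrow> nat \<Rightarrow> nat \<Rightarrow> complex mat" where
  "munit d i j = mat d d (\<lambda>(a, b). if a = i \<and> b = j then 1 else 0)"

definition Phi :: "nat \<Rightarrow> complex mat" where
  "Phi d = mat (d * d) (d * d)
     (\<lambda>(r, s). if r div d = r mod d \<and> s div d = s mod d then 1 else 0)"

text \<open>Maps are HOL functions on matrices; only their values on the relevant carrier matter.
 Parallel composition M (x) N of M : A1 -> B1 and N : A2 -> B2, defined by linear extension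
 on product matrix units.\<close>
definition par :: "nat \<Rightarrow> nat \<Rightarrow> nat \<Rightarrow> nat \<Rightarrow> (complex mat \<Rightarrow> complex mat)
    \<Rightarrow> (complex mat \<Rightarrow> complex mat) \<Rightarrow> complex mat \<Rightarrow> complex mat" where
  "par dA1 dA2 dB1 dB2 M N X = mat (dB1 * dB2) (dB1 * dB2) (\<lambda>(p, q).
     \<Sum>i<dA1. \<Sum>j<dA1. \<Sum>k<dA2. \<Sum>l<dA2.
        X $$ (i * dA2 + k, j * dA2 + l) *
        (M (munit dA1 i j)) $$ (p div dB2, q div dB2) *
        (N (munit dA2 k l)) $$ (p mod dB2, q mod dB2))"

definition lin_map :: "nat \<Rightarrow> nat \<Rightarrow> (complex mat \<Rightarrow> complex mat) \<Rightarrow> bool" where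
  "lin_map dA dB M \<longleftrightarrow>
     (\<forall>X\<in>carrier_mat dA dA. M X \<in> carrier_mat dB dB) \<and>
     (\<forall>X\<in>carrier_mat dA dA. \<forall>Y\<in>carrier_mat dA dA. M (X + Y) = M X + M Y) \<and>
     (\<forall>X\<in>carrier_mat dA dA. \<forall>c. M (c \<cdot>\<^sub>m X) = c \<cdot>\<^sub>m M X)"

definition channel :: "sys \<Rightarrow> sys \<Rightarrow> (complex mat \<Rightarrow> complex mat) \<Rightarrow> bool" where
  "channel A B M \<longleftrightarrow> lin_map (dim A) (dim B) M \<and>
     (\<forall>X\<in>carrier_mat (dim A) (dim A). mtrace (M X) = mtrace X) \<and>
     (\<forall>n X. psd (n * dim A) X \<longrightarrow> psd (n * dim B) (par n (dim A) n (dim B) (\<lambda>Y. Y) M X))"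

text \<open>Choi matrix M_{B:A'} = (M (x) id)(Phi_{AA'}), output system first.\<close>
definition choi :: "nat \<Rightarrow> nat \<Rightarrow> (complex mat \<Rightarrow> complex mat) \<Rightarrow> complex mat" where
  "choi dA dB M = mat (dB * dA) (dB * dA)
     (\<lambda>(r, s). (M (munit dA (r mod dA) (s mod dA))) $$ (r div dA, s div dA))"

definition rchoi :: "sys \<Rightarrow> sys \<Rightarrow> (complex mat \<Rightarrow> complex mat) \<Rightarrow> complex mat" where
  "rchoi A B M = (1 / of_nat (dim A)) \<cdot>\<^sub>m choi (dim A) (dim B) M"

type_synonym free_states = "sys \<Rightarrow> complex mat set"

definition CD_op :: "free_states \<Rightarrow> sys \<Rightarrow> sys \<Rightarrow> (complex mat \<Rightarrow> complex mat) \<Rightarrow> bool" where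
  "CD_op F A B M \<longleftrightarrow> channel A B M \<and> rchoi A B M \<in> F (B @ A)"

definition admissible_free_states :: "free_states \<Rightarrow> bool" where
  "admissible_free_states F \<longleftrightarrow>
     (\<forall>A. is_sys A \<longrightarrow> (\<forall>\<rho>\<in>F A. density (dim A) \<rho>)) \<and>
     (\<forall>A B. is_sys A \<longrightarrow> is_sys B \<longrightarrow> (\<forall>\<rho>\<in>F A. \<forall>\<sigma>\<in>F B. kron \<rho> \<sigma> \<in> F (A @ B))) \<and>
     (\<forall>A B. is_sys A \<longrightarrow> is_sys B \<longrightarrow> (\<forall>\<rho>\<in>F (A @ B).
        ptrace_snd (dim A) (dim B) \<rho> \<in> F A \<and> ptrace_fst (dim A) (dim B) \<rho> \<in> F B)) \<and>
     (\<forall>A B C D. is_sys A \<longrightarrow> is_sys B \<longrightarrow> is_sys C \<longrightarrow> is_sys D \<longrightarrow> (\<forall>\<rho>\<in>F (A @ B @ C @ D).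
        swap_mid (dim A) (dim B) (dim C) (dim D) \<rho> \<in> F (A @ C @ B @ D)))"

definition CD_resource_theory :: "free_states \<Rightarrow> bool" where
  "CD_resource_theory F \<longleftrightarrow>
     (\<forall>A. is_sys A \<longrightarrow> CD_op F A A (\<lambda>X. X)) \<and>
     (\<forall>A B. is_sys A \<longrightarrow> is_sys B \<longrightarrow> CD_op F (A @ B) (B @ A) (swap_mat (dim A) (dim B))) \<and>
     (\<forall>A B. is_sys A \<longrightarrow> is_sys B \<longrightarrow> CD_op F (A @ B) A (ptrace_snd (dim A) (dim B))) \<and>
     (\<forall>A B C M N. is_sys A \<longrightarrow> is_sys B \<longrightarrow> is_sys C \<longrightarrow>
        CD_op F A B M \<longrightarrow> CD_op F B C N \<longrightarrow> CD_op F A C (N \<circ> M)) \<and>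
     (\<forall>A1 A2 B1 B2 M N. is_sys A1 \<longrightarrow> is_sys A2 \<longrightarrow> is_sys B1 \<longrightarrow> is_sys B2 \<longrightarrow>
        CD_op F A1 B1 M \<longrightarrow> CD_op F A2 B2 N \<longrightarrow>
        CD_op F (A1 @ A2) (B1 @ B2) (par (dim A1) (dim A2) (dim B1) (dim B2) M N))"

end

theory Submission
  imports Defs
begin

definition qf :: "nat \<Rightarrow> complex mat \<Rightarrow> (nat \<Rightarrow> complex) \<Rightarrow> complex" where
 "qf n X v = (\<Sum>r<n. \<Sum>s<n. cnj (v r) * X$$(r,s) * v s)"

lemma qf_vec: "X \<in> carrier_mat n n \<Longrightarrow> v \<in> carrier_vec n \<Longrightarrow>
   conjugate v \<bullet> (X *\<^sub>v v) = qf n X (\<lambda>i. v$i)"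
  unfolding qf_def scalar_prod_def mult_mat_vec_def
  by (auto simp: sum_distrib_left mult.assoc atLeast0LessThan intro!: sum.cong)

lemma psd_iff: "psd n X \<longleftrightarrow> X \<in> carrier_mat n n \<and> (\<forall>v. 0 \<le> qf n X v)"
proof
  assume a: "psd n X"
  show "X \<in> carrier_mat n n \<and> (\<forall>v. 0 \<le> qf n X v)"
  proof (intro conjI allI)
    show X: "X \<in> carrier_mat n n" using a unfolding psd_def by auto
    fix v
    have "qf n X v = qf n X (\<lambda>i. vec n v $ i)" unfolding qf_def by (auto intro!: sum.cong)
    also have "\<dots> = conjugate (vec n v) \<bullet> (X *\<^sub>v vec n v)" using qf_vec[OF X, of "vec n v"] by auto
    finally show "0 \<le> qf n X v" using a unfolding psd_def by (auto simp: less_eq_complex_def)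
  qed
next
  assume a: "X \<in> carrier_mat n n \<and> (\<forall>v. 0 \<le> qf n X v)"
  then show "psd n X" unfolding psd_def using qf_vec[of X n]
    by (auto simp: less_eq_complex_def)
qed

lemma if0_mult: "(if P then x else 0) * y = (if P then x * y else (0::'a::mult_zero))"
  and mult_if0: "y * (if P then x else 0) = (if P then y * x else (0::'a::mult_zero))"
  and cnj_if0: "cnj (if P then z else 0) = (if P then cnj z else 0)"
  by auto

lemma sum_if0_out: "(\<Sum>s\<in>A. if P then f s else 0) = (if P then (\<Sum>s\<in>A. f s) else 0)"
  by simp

lemma qf_sparse1: "t < n \<Longrightarrow> qf n X (\<lambda>i. if i = t then a else 0) = cnj a * X$$(t,t) * a"
  unfolding qf_def by (simp add: if0_mult mult_if0 cnj_if0)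

lemma qf_sparse2: "r < n \<Longrightarrow> t < n \<Longrightarrow> r \<noteq> t \<Longrightarrow>
   qf n X (\<lambda>i. if i = r then a else if i = t then b else 0) =
   cnj a * X$$(r,r) * a + cnj a * X$$(r,t) * b + cnj b * X$$(t,r) * a + cnj b * X$$(t,t) * b"
proof -
  assume h: "r < n" "t < n" "r \<noteq> t"
  have e: "(\<lambda>i. if i = r then a else if i = t then b else 0) = (\<lambda>i. (if i = r then a else 0) + (if i = t then b else 0))"
    using h by auto
  show ?thesis unfolding qf_def e using h
    by (simp add: distrib_left distrib_right sum.distrib if0_mult mult_if0 cnj_if0)
qed

lemma psd_diag: "psd n X \<Longrightarrow> t < n \<Longrightarrow> 0 \<le> X$$(t,t)"
proof -
  assume "psd n X" "t < n"
  then have "0 \<le> qf n X (\<lambda>i. if i = t then 1 else 0)" unfolding psd_iff by blast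
  then show ?thesis using qf_sparse1[OF \<open>t < n\<close>, of X 1] by simp
qed

lemma psd_herm: assumes p: "psd n X" and r: "r < n" and s: "s < n"
  shows "X$$(s,r) = cnj (X$$(r,s))"
proof (cases "r = s")
  case True
  then show ?thesis using psd_diag[OF p r] by (auto simp: less_eq_complex_def complex_eq_iff)
next
  case False
  have q: "\<And>v. 0 \<le> qf n X v" using p unfolding psd_iff by auto
  have 1: "0 \<le> qf n X (\<lambda>i. if i = r then 1 else if i = s then 1 else 0)" by (rule q)
  have 2: "0 \<le> qf n X (\<lambda>i. if i = r then 1 else if i = s then \<i> else 0)" by (rule q)
  have 3: "0 \<le> X$$(r,r)" "0 \<le> X$$(s,s)" using psd_diag[OF p] r s by auto
  show ?thesis using 1 2 3 unfolding qf_sparse2[OF r s False]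
    by (simp add: less_eq_complex_def complex_eq_iff)
qed

lemma psd_zero: assumes p: "psd n X" and t: "t < n" and z: "X$$(t,t) = 0" and r: "r < n"
  shows "X$$(r,t) = 0"
proof (rule ccontr)
  assume c0: "X$$(r,t) \<noteq> 0"
  then have rt: "r \<noteq> t" using z by auto
  define c where "c = X$$(r,t)"
  define nc where "nc = (Re c)^2 + (Im c)^2"
  have ncp: "nc > 0" using c0 unfolding nc_def c_def by (simp add: complex_eq_iff sum_power2_gt_zero_iff)
  define x where "x = (Re (X$$(r,r)) + 1) / nc"
  have q: "\<And>v. 0 \<le> qf n X v" using p unfolding psd_iff by auto
  have h: "X$$(t,r) = cnj c" using psd_herm[OF p r t] c_def by simp
  have "0 \<le> qf n X (\<lambda>i. if i = r then 1 else if i = t then - of_real x * cnj c else 0)" by (rule q)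
  also have "\<dots> = X$$(r,r) - 2 * of_real x * (c * cnj c)"
    using qf_sparse2[OF r t rt, of X 1 "- of_real x * cnj c"] h z c_def by (simp add: algebra_simps)
  finally have "0 \<le> Re (X$$(r,r)) - 2 * x * nc"
    by (simp add: less_eq_complex_def nc_def power2_eq_square algebra_simps)
  moreover have "x * nc = Re (X$$(r,r)) + 1" using ncp unfolding x_def by simp
  moreover have "0 \<le> Re (X$$(r,r))" using psd_diag[OF p r] by (simp add: less_eq_complex_def)
  ultimately show False by linarith
qed

lemma qf_shift: assumes t: "t < n"
  shows "qf n X (\<lambda>i. v i + (if i = t then l else 0)) =
    qf n X v + l * (\<Sum>r<n. cnj (v r) * X$$(r,t)) + cnj l * (\<Sum>s<n. X$$(t,s) * v s) + cnj l * X$$(t,t) * l"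
  unfolding qf_def using t
  apply (simp add: distrib_left distrib_right sum.distrib if0_mult mult_if0 cnj_if0)
  apply (simp add: sum_distrib_left mult_ac sum_if0_out)
  done

lemma psd_schur: assumes p: "psd n X" and t: "t < n" and nz: "X$$(t,t) \<noteq> 0"
  shows "psd n (mat n n (\<lambda>(r,s). X$$(r,s) - X$$(r,t) * cnj (X$$(s,t)) / X$$(t,t)))"
  unfolding psd_iff
proof (intro conjI allI)
  show "mat n n (\<lambda>(r, s). X $$ (r, s) - X $$ (r, t) * cnj (X $$ (s, t)) / X $$ (t, t)) \<in> carrier_mat n n" by simp
  fix v
  define a where "a = X$$(t,t)"
  have ar: "cnj a = a" using psd_diag[OF p t] unfolding a_def by (simp add: less_eq_complex_def complex_eq_iff)
  have anz: "a \<noteq> 0" using nz a_def by simp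
  define c where "c = (\<Sum>r<n. cnj (v r) * X$$(r,t))"
  have d: "(\<Sum>s<n. X$$(t,s) * v s) = cnj c"
    unfolding c_def using psd_herm[OF p t] by (auto intro!: sum.cong)
  have q: "\<And>v. 0 \<le> qf n X v" using p unfolding psd_iff by auto
  have "qf n (mat n n (\<lambda>(r,s). X$$(r,s) - X$$(r,t) * cnj (X$$(s,t)) / X$$(t,t))) v
     = qf n X v - (\<Sum>r<n. \<Sum>s<n. cnj (v r) * X$$(r,t) * (cnj (X$$(s,t)) * v s)) / a"
    unfolding qf_def a_def by (simp add: algebra_simps sum_subtractf sum_divide_distrib)
  also have "(\<Sum>r<n. \<Sum>s<n. cnj (v r) * X$$(r,t) * (cnj (X$$(s,t)) * v s)) = c * cnj c"
    unfolding c_def cnj_sum sum_product by (simp add: mult_ac)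
  also have "qf n X v - c * cnj c / a = qf n X (\<lambda>i. v i + (if i = t then - cnj c / a else 0))"
    unfolding qf_shift[OF t] d c_def[symmetric] a_def[symmetric] using anz ar
    by (simp add: field_simps)
  finally show "0 \<le> qf n (mat n n (\<lambda>(r,s). X$$(r,s) - X$$(r,t) * cnj (X$$(s,t)) / X$$(t,t))) v"
    using q by simp
qed

lemma decomp_aux:
  assumes "finite S"
  shows "S \<subseteq> {..<n} \<Longrightarrow> psd n X \<Longrightarrow> (\<forall>r<n. \<forall>s<n. r \<notin> S \<longrightarrow> X$$(r,s) = 0) \<Longrightarrow>
     \<exists>w. \<forall>r<n. \<forall>s<n. X$$(r,s) = (\<Sum>m\<in>S. w m r * cnj (w m s))"
  using assms
proof (induction S arbitrary: X rule: finite_induct)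
  case empty
  then show ?case by auto
next
  case (insert t S)
  have t: "t < n" using insert by auto
  have p: "psd n X" by fact
  show ?case
  proof (cases "X$$(t,t) = 0")
    case True
    have col: "\<And>r. r < n \<Longrightarrow> X$$(r,t) = 0" using psd_zero[OF p t True] by auto
    have row: "\<And>s. s < n \<Longrightarrow> X$$(t,s) = 0"
    proof -
      fix s assume s: "s < n"
      show "X$$(t,s) = 0" using psd_herm[OF p s t] col[OF s] by simp
    qed
    have "\<forall>r<n. \<forall>s<n. r \<notin> S \<longrightarrow> X$$(r,s) = 0" using insert.prems row by auto
    then obtain w where w: "\<forall>r<n. \<forall>s<n. X$$(r,s) = (\<Sum>m\<in>S. w m r * cnj (w m s))"
      using insert.IH[OF _ p] insert.prems by auto
    define w' where "w' = w(t := (\<lambda>_. 0))"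
    have "\<forall>r<n. \<forall>s<n. X$$(r,s) = (\<Sum>m\<in>insert t S. w' m r * cnj (w' m s))"
    proof (intro allI impI)
      fix r s assume "r < n" "s < n"
      have "(\<Sum>m\<in>insert t S. w' m r * cnj (w' m s)) = (\<Sum>m\<in>S. w' m r * cnj (w' m s))"
        using insert by (simp add: w'_def)
      also have "\<dots> = (\<Sum>m\<in>S. w m r * cnj (w m s))" using insert by (auto simp: w'_def intro!: sum.cong)
      finally show "X$$(r,s) = (\<Sum>m\<in>insert t S. w' m r * cnj (w' m s))" using w \<open>r < n\<close> \<open>s < n\<close> by simp
    qed
    then show ?thesis by blast
  next
    case False
    define Y where "Y = mat n n (\<lambda>(r,s). X$$(r,s) - X$$(r,t) * cnj (X$$(s,t)) / X$$(t,t))"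
    have pY: "psd n Y" unfolding Y_def by (rule psd_schur[OF p t False])
    have suppY: "\<forall>r<n. \<forall>s<n. r \<notin> S \<longrightarrow> Y$$(r,s) = 0"
    proof (intro allI impI)
      fix r s assume rs: "r < n" "s < n" "r \<notin> S"
      show "Y$$(r,s) = 0"
      proof (cases "r = t")
        case True
        then show ?thesis using psd_herm[OF p rs(2) t] rs False unfolding Y_def by simp
      next
        case False
        then have "X$$(r,s) = 0" "X$$(r,t) = 0" using insert.prems rs t by auto
        then show ?thesis using rs unfolding Y_def by simp
      qed
    qed
    obtain w where w: "\<forall>r<n. \<forall>s<n. Y$$(r,s) = (\<Sum>m\<in>S. w m r * cnj (w m s))"
      using insert.IH[OF _ pY suppY] insert.prems by auto
    define a where "a = Re (X$$(t,t))"
    have aX: "X$$(t,t) = of_real a" using psd_diag[OF p t] unfolding a_def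
      by (simp add: less_eq_complex_def complex_eq_iff)
    have an: "a \<noteq> 0" using False aX by auto
    have "a \<ge> 0" using psd_diag[OF p t] unfolding a_def by (simp add: less_eq_complex_def)
    then have apos: "a > 0" using an by simp
    define w0 where "w0 = (\<lambda>r. X$$(r,t) / of_real (sqrt a))"
    define w' where "w' = w(t := w0)"
    have "\<forall>r<n. \<forall>s<n. X$$(r,s) = (\<Sum>m\<in>insert t S. w' m r * cnj (w' m s))"
    proof (intro allI impI)
      fix r s assume rs: "r < n" "s < n"
      have "(\<Sum>m\<in>insert t S. w' m r * cnj (w' m s)) = w0 r * cnj (w0 s) + (\<Sum>m\<in>S. w' m r * cnj (w' m s))"
        using insert by (simp add: w'_def)
      also have "(\<Sum>m\<in>S. w' m r * cnj (w' m s)) = Y$$(r,s)" using insert w rs by (auto simp: w'_def intro!: sum.cong)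
      also have "w0 r * cnj (w0 s) = X$$(r,t) * cnj (X$$(s,t)) / X$$(t,t)"
      proof -
        have sq: "of_real (sqrt a) * of_real (sqrt a) = (of_real a :: complex)"
          using apos by (simp flip: of_real_mult)
        have "w0 r * cnj (w0 s) = X$$(r,t) * cnj (X$$(s,t)) / (of_real (sqrt a) * of_real (sqrt a))"
          unfolding w0_def by simp
        then show ?thesis unfolding sq aX .
      qed
      finally show "X$$(r,s) = (\<Sum>m\<in>insert t S. w' m r * cnj (w' m s))"
        using rs unfolding Y_def by simp
    qed
    then show ?thesis by blast
  qed
qed

lemma psd_decomp: assumes "psd n X"
  shows "\<exists>w. \<forall>r<n. \<forall>s<n. X$$(r,s) = (\<Sum>m<n. w m r * cnj (w m s))"
  using decomp_aux[of "{..<n}" n X] assms by auto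

lemma sum_split: "(\<Sum>x<m*n. f x) = (\<Sum>i<m. \<Sum>k<n. f (i*n+k :: nat) :: 'a::comm_monoid_add)"
proof -
  have "(\<Sum>x<m*n. f x) = (\<Sum>i<m. \<Sum>x\<in>{i*n..<i*n+n}. f x)"
    using sum.nat_group[of "\<lambda>i. f i" n m] by simp
  also have "\<dots> = (\<Sum>i<m. \<Sum>k<n. f (i*n+k))"
  proof (rule sum.cong[OF refl])
    fix i
    show "(\<Sum>x\<in>{i*n..<i*n+n}. f x) = (\<Sum>k<n. f (i*n+k))"
      using sum.shift_bounds_nat_ivl[of f 0 "i*n" n] by (simp add: atLeast0LessThan add.commute)
  qed
  finally show ?thesis .
qed

lemma idx_div[simp]: "k < (n::nat) \<Longrightarrow> (i*n+k) div n = i"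
  by simp
lemma idx_mod[simp]: "k < (n::nat) \<Longrightarrow> (i*n+k) mod n = k"
  by simp
lemma idx_lt: "i < m \<Longrightarrow> k < (n::nat) \<Longrightarrow> i*n+k < m*n"
proof -
  assume "i < m" "k < n"
  then have "i*n+k < i*n + n" by simp
  also have "\<dots> = (i+1)*n" by simp
  also have "\<dots> \<le> m*n" using \<open>i < m\<close> by (intro mult_right_mono) auto
  finally show ?thesis .
qed

lemma munit_entry[simp]: "a < d \<Longrightarrow> b < d \<Longrightarrow> munit d i j $$ (a,b) = (if a = i \<and> b = j then 1 else 0)"
  unfolding munit_def by simp
lemma munit_carrier[simp]: "munit d i j \<in> carrier_mat d d" unfolding munit_def by simp
lemma munit_dims[simp]: "dim_row (munit d i j) = d" "dim_col (munit d i j) = d" unfolding munit_def by simp_all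

lemma if_and0: "(if P \<and> Q then x else 0) = (if P then if Q then x else 0 else 0)" by simp

definition mapC :: "nat \<Rightarrow> nat \<Rightarrow> complex mat \<Rightarrow> complex mat \<Rightarrow> complex mat" where
 "mapC dA dB C X = mat dB dB (\<lambda>(b,b'). \<Sum>k<dA. \<Sum>l<dA. X$$(k,l) * C$$(b*dA+k, b'*dA+l))"

lemma mapC_carrier[simp]: "mapC dA dB C X \<in> carrier_mat dB dB" unfolding mapC_def by simp
lemma mapC_dims[simp]: "dim_row (mapC dA dB C X) = dB" "dim_col (mapC dA dB C X) = dB" unfolding mapC_def by simp_all

lemma mapC_munit: "k < dA \<Longrightarrow> l < dA \<Longrightarrow>
  mapC dA dB C (munit dA k l) = mat dB dB (\<lambda>(b,b'). C$$(b*dA+k, b'*dA+l))"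
  unfolding mapC_def by (auto simp: if0_mult if_and0 sum_if0_out intro!: eq_matI)

lemma choi_mapC: assumes "C \<in> carrier_mat (dB*dA) (dB*dA)" "0 < dA"
  shows "choi dA dB (mapC dA dB C) = C"
proof (rule eq_matI)
  fix r s assume rs: "r < dim_row C" "s < dim_col C"
  then have r: "r < dB*dA" and s: "s < dB*dA" using assms by auto
  have "r div dA < dB" "s div dA < dB" using r s by (auto simp: less_mult_imp_div_less)
  then show "choi dA dB (mapC dA dB C) $$ (r,s) = C $$ (r,s)"
    using r s assms(2) unfolding choi_def by (simp add: mapC_munit)
qed (insert assms, auto simp: choi_def)

lemma mapC_add: "A \<in> carrier_mat dA dA \<Longrightarrow> B \<in> carrier_mat dA dA \<Longrightarrow>
  mapC dA dB C (A + B) = mapC dA dB C A + mapC dA dB C B"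
  unfolding mapC_def by (auto simp: sum.distrib distrib_right intro!: eq_matI)

lemma mapC_smult: "A \<in> carrier_mat dA dA \<Longrightarrow> mapC dA dB C (c \<cdot>\<^sub>m A) = c \<cdot>\<^sub>m mapC dA dB C A"
  unfolding mapC_def by (auto simp: sum_distrib_left mult.assoc intro!: eq_matI)

lemma lin_mapC: "lin_map dA dB (mapC dA dB C)"
  unfolding lin_map_def using mapC_add mapC_smult by auto


lemma lin_munit_choi: assumes lin: "lin_map dA dB M" and k: "k < dA" and l: "l < dA"
  shows "M (munit dA k l) = mapC dA dB (choi dA dB M) (munit dA k l)"
proof -
  have c: "M (munit dA k l) \<in> carrier_mat dB dB" using lin unfolding lin_map_def by auto
  show ?thesis unfolding mapC_munit[OF k l]
    by (rule eq_matI) (insert c k l, auto simp: choi_def idx_lt)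
qed

lemma lin_eq_mapC: assumes lin: "lin_map dA dB M" and X: "X \<in> carrier_mat dA dA"
  shows "M X = mapC dA dB (choi dA dB M) X"
proof -
  define XS where "XS S = mat dA dA (\<lambda>(k,l). if (k,l) \<in> S then X$$(k,l) else 0)" for S
  have add: "\<And>A B. A \<in> carrier_mat dA dA \<Longrightarrow> B \<in> carrier_mat dA dA \<Longrightarrow> M (A + B) = M A + M B"
    and sm: "\<And>A c. A \<in> carrier_mat dA dA \<Longrightarrow> M (c \<cdot>\<^sub>m A) = c \<cdot>\<^sub>m M A"
    and car: "\<And>A. A \<in> carrier_mat dA dA \<Longrightarrow> M A \<in> carrier_mat dB dB"
    using lin unfolding lin_map_def by auto
  have "finite S \<Longrightarrow> S \<subseteq> {..<dA} \<times> {..<dA} \<Longrightarrow> M (XS S) = mapC dA dB (choi dA dB M) (XS S)" for S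
  proof (induction S rule: finite_induct)
    case empty
    have e: "XS {} = 0 \<cdot>\<^sub>m X" unfolding XS_def using X by (auto intro!: eq_matI)
    have "M (XS {}) = 0 \<cdot>\<^sub>m M X" unfolding e using sm[OF X] by simp
    also have "\<dots> = mapC dA dB (choi dA dB M) (XS {})"
      using car[OF X] unfolding XS_def mapC_def by (auto intro!: eq_matI)
    finally show ?case .
  next
    case (insert p S)
    obtain k l where p: "p = (k,l)" by force
    have kl: "k < dA" "l < dA" using insert p by auto
    have e: "XS (insert p S) = XS S + X$$(k,l) \<cdot>\<^sub>m munit dA k l"
      unfolding XS_def p using insert p by (auto intro!: eq_matI)
    have c1: "XS S \<in> carrier_mat dA dA" unfolding XS_def by simp
    have c2: "X$$(k,l) \<cdot>\<^sub>m munit dA k l \<in> carrier_mat dA dA" by simp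
    show ?case unfolding e add[OF c1 c2] mapC_add[OF c1 c2] sm[OF munit_carrier] mapC_smult[OF munit_carrier]
      using insert lin_munit_choi[OF lin kl] by simp
  qed
  moreover have "XS ({..<dA} \<times> {..<dA}) = X" unfolding XS_def using X by (auto intro!: eq_matI)
  ultimately show ?thesis by (metis finite_SigmaI finite_lessThan order_refl)
qed

lemma mapC_TP: assumes pt: "ptrace_fst dB dA C = 1\<^sub>m dA" and X: "X \<in> carrier_mat dA dA"
  shows "mtrace (mapC dA dB C X) = mtrace X"
proof -
  have "mtrace (mapC dA dB C X) = (\<Sum>b<dB. \<Sum>k<dA. \<Sum>l<dA. X$$(k,l) * C$$(b*dA+k, b*dA+l))"
    unfolding mtrace_def mapC_def by simp
  also have "\<dots> = (\<Sum>k<dA. \<Sum>l<dA. X$$(k,l) * (\<Sum>b<dB. C$$(b*dA+k, b*dA+l)))"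
    by (simp add: sum_distrib_left sum.swap[of _ "{..<dB}"])
  also have "\<dots> = (\<Sum>k<dA. \<Sum>l<dA. X$$(k,l) * (1\<^sub>m dA) $$ (k,l))"
    by (intro sum.cong refl, subst pt[symmetric], simp add: ptrace_fst_def)
  also have "\<dots> = mtrace X" unfolding mtrace_def using X by (simp add: if_distrib cong: if_cong)
  finally show ?thesis .
qed


lemma par_id_entry: assumes p: "p < n*dB" and q: "q < n*dB" and dB: "0 < dB"
  shows "par n dA n dB (\<lambda>Y. Y) M X $$ (p,q) =
    (\<Sum>k<dA. \<Sum>l<dA. X$$((p div dB)*dA+k, (q div dB)*dA+l) * M (munit dA k l) $$ (p mod dB, q mod dB))"
proof -
  have pd: "p div dB < n" "q div dB < n" using p q dB by (auto simp: less_mult_imp_div_less)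
  show ?thesis unfolding par_def using p q pd
    by (simp add: if0_mult mult_if0 if_and0 sum_if0_out)
qed

lemma qf_sum_mat: "qf N (mat N N (\<lambda>(p,q). \<Sum>m<K. f m p q)) v = (\<Sum>m<K. qf N (mat N N (\<lambda>(p,q). f m p q)) v)"
proof -
  have "qf N (mat N N (\<lambda>(p,q). \<Sum>m<K. f m p q)) v = (\<Sum>p<N. \<Sum>q<N. \<Sum>m<K. cnj (v p) * f m p q * v q)"
    unfolding qf_def by (simp add: sum_distrib_left sum_distrib_right)
  also have "\<dots> = (\<Sum>p<N. \<Sum>m<K. \<Sum>q<N. cnj (v p) * f m p q * v q)"
    by (rule sum.cong[OF refl], rule sum.swap)
  also have "\<dots> = (\<Sum>m<K. \<Sum>p<N. \<Sum>q<N. cnj (v p) * f m p q * v q)"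
    by (rule sum.swap)
  also have "\<dots> = (\<Sum>m<K. qf N (mat N N (\<lambda>(p,q). f m p q)) v)"
    unfolding qf_def by simp
  finally show ?thesis .
qed

lemma qf_congr: "qf n (mat n n (\<lambda>(p,q). \<Sum>x<N. \<Sum>y<N. cnj (T x p) * X$$(x,y) * T y q)) v
   = qf N X (\<lambda>x. \<Sum>p<n. T x p * v p)"
proof -
  define G where "G = (\<lambda>(p::nat,q::nat) (x::nat,y::nat). cnj (v p) * cnj (T x p) * X$$(x,y) * T y q * v q)"
  have "qf n (mat n n (\<lambda>(p,q). \<Sum>x<N. \<Sum>y<N. cnj (T x p) * X$$(x,y) * T y q)) v
     = (\<Sum>p<n. \<Sum>q<n. \<Sum>x<N. \<Sum>y<N. G (p,q) (x,y))"
    unfolding qf_def G_def by (simp add: sum_distrib_left sum_distrib_right mult_ac)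
  also have "\<dots> = (\<Sum>pq\<in>{..<n}\<times>{..<n}. \<Sum>xy\<in>{..<N}\<times>{..<N}. G pq xy)"
    by (simp only: sum.cartesian_product')
  also have "\<dots> = (\<Sum>xy\<in>{..<N}\<times>{..<N}. \<Sum>pq\<in>{..<n}\<times>{..<n}. G pq xy)"
    by (rule sum.swap)
  also have "\<dots> = (\<Sum>x<N. \<Sum>y<N. \<Sum>p<n. \<Sum>q<n. G (p,q) (x,y))"
    by (simp only: sum.cartesian_product')
  also have "\<dots> = qf N X (\<lambda>x. \<Sum>p<n. T x p * v p)"
    unfolding qf_def G_def cnj_sum by (simp add: sum_distrib_left sum_distrib_right mult_ac)
  finally show ?thesis .
qed


lemma mapC_CP: assumes C: "psd (dB*dA) C" and X: "psd (n*dA) X" and dA: "0 < dA" and dB: "0 < dB"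
  shows "psd (n*dB) (par n dA n dB (\<lambda>Y. Y) (mapC dA dB C) X)"
proof -
  obtain w where w: "\<forall>r<dB*dA. \<forall>s<dB*dA. C$$(r,s) = (\<Sum>m<dB*dA. w m r * cnj (w m s))"
    using psd_decomp[OF C] by blast
  define T where "T m x p = (if x div dA = p div dB then cnj (w m ((p mod dB)*dA + x mod dA)) else 0)" for m x p
  define Y where "Y = par n dA n dB (\<lambda>Y. Y) (mapC dA dB C) X"
  have Yeq: "Y = mat (n*dB) (n*dB) (\<lambda>(p,q). \<Sum>m<dB*dA. \<Sum>x<n*dA. \<Sum>y<n*dA. cnj (T m x p) * X$$(x,y) * T m y q)"
  proof (rule eq_matI)
    show "dim_row Y = dim_row (mat (n*dB) (n*dB) (\<lambda>(p,q). \<Sum>m<dB*dA. \<Sum>x<n*dA. \<Sum>y<n*dA. cnj (T m x p) * X$$(x,y) * T m y q))"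
      unfolding Y_def par_def by simp
    show "dim_col Y = dim_col (mat (n*dB) (n*dB) (\<lambda>(p,q). \<Sum>m<dB*dA. \<Sum>x<n*dA. \<Sum>y<n*dA. cnj (T m x p) * X$$(x,y) * T m y q))"
      unfolding Y_def par_def by simp
    fix p q assume "p < dim_row (mat (n*dB) (n*dB) (\<lambda>(p,q). \<Sum>m<dB*dA. \<Sum>x<n*dA. \<Sum>y<n*dA. cnj (T m x p) * X$$(x,y) * T m y q))"
      "q < dim_col (mat (n*dB) (n*dB) (\<lambda>(p,q). \<Sum>m<dB*dA. \<Sum>x<n*dA. \<Sum>y<n*dA. cnj (T m x p) * X$$(x,y) * T m y q))"
    then have p: "p < n*dB" and q: "q < n*dB" by auto
    have pd: "p div dB < n" "q div dB < n" using p q dB by (auto simp: less_mult_imp_div_less)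
    have pm: "p mod dB < dB" "q mod dB < dB" using dB by auto
    have "Y $$ (p,q) = (\<Sum>k<dA. \<Sum>l<dA. X$$((p div dB)*dA+k, (q div dB)*dA+l) * C$$((p mod dB)*dA+k, (q mod dB)*dA+l))"
      unfolding Y_def par_id_entry[OF p q dB] using pm by (simp add: mapC_munit)
    also have "\<dots> = (\<Sum>k<dA. \<Sum>l<dA. \<Sum>m<dB*dA. cnj (T m ((p div dB)*dA+k) p) * X$$((p div dB)*dA+k, (q div dB)*dA+l) * T m ((q div dB)*dA+l) q)"
    proof (intro sum.cong refl)
      fix k l assume k: "k \<in> {..<dA}" and l: "l \<in> {..<dA}"
      have "(p mod dB)*dA+k < dB*dA" "(q mod dB)*dA+l < dB*dA" using k l pm by (auto intro: idx_lt)
      then show "X$$((p div dB)*dA+k, (q div dB)*dA+l) * C$$((p mod dB)*dA+k, (q mod dB)*dA+l) =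
        (\<Sum>m<dB*dA. cnj (T m ((p div dB)*dA+k) p) * X$$((p div dB)*dA+k, (q div dB)*dA+l) * T m ((q div dB)*dA+l) q)"
        using w k l unfolding T_def by (simp add: sum_distrib_left mult_ac)
    qed
    also have "\<dots> = (\<Sum>m<dB*dA. \<Sum>k<dA. \<Sum>l<dA. cnj (T m ((p div dB)*dA+k) p) * X$$((p div dB)*dA+k, (q div dB)*dA+l) * T m ((q div dB)*dA+l) q)"
      by (simp add: sum.swap[of _ "{..<dB*dA}"])
    also have "\<dots> = (\<Sum>m<dB*dA. \<Sum>x<n*dA. \<Sum>y<n*dA. cnj (T m x p) * X$$(x,y) * T m y q)"
    proof (rule sum.cong[OF refl])
      fix m
      have "(\<Sum>x<n*dA. \<Sum>y<n*dA. cnj (T m x p) * X$$(x,y) * T m y q)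
          = (\<Sum>i<n. \<Sum>k<dA. \<Sum>j<n. \<Sum>l<dA. cnj (T m (i*dA+k) p) * X$$(i*dA+k,j*dA+l) * T m (j*dA+l) q)"
        by (simp add: sum_split)
      also have "\<dots> = (\<Sum>k<dA. \<Sum>l<dA. cnj (T m ((p div dB)*dA+k) p) * X$$((p div dB)*dA+k, (q div dB)*dA+l) * T m ((q div dB)*dA+l) q)"
        unfolding T_def using pd by (simp add: if0_mult mult_if0 cnj_if0 sum_if0_out)
      finally show "(\<Sum>k<dA. \<Sum>l<dA. cnj (T m ((p div dB)*dA+k) p) * X$$((p div dB)*dA+k, (q div dB)*dA+l) * T m ((q div dB)*dA+l) q)
          = (\<Sum>x<n*dA. \<Sum>y<n*dA. cnj (T m x p) * X$$(x,y) * T m y q)" by simp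
    qed
    finally show "Y $$ (p,q) = mat (n*dB) (n*dB) (\<lambda>(p,q). \<Sum>m<dB*dA. \<Sum>x<n*dA. \<Sum>y<n*dA. cnj (T m x p) * X$$(x,y) * T m y q) $$ (p,q)"
      using p q by simp
  qed
  have qX: "\<And>u. 0 \<le> qf (n*dA) X u" using X unfolding psd_iff by auto
  have "0 \<le> qf (n*dB) Y v" for v
    unfolding Yeq by (subst qf_sum_mat, subst qf_congr, rule sum_nonneg, rule qX)
  then show ?thesis unfolding psd_iff Y_def[symmetric] unfolding Y_def par_def by simp
qed


lemma dim_pos: "is_sys A \<Longrightarrow> 0 < dim A"
  by (induction A) (auto simp: is_sys_def dim_def)
lemma is_sys_append[simp]: "is_sys (A @ B) \<longleftrightarrow> is_sys A \<and> is_sys B"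
  by (auto simp: is_sys_def)
lemma is_sys_Nil[simp]: "is_sys []" by (simp add: is_sys_def)
lemma dim_append[simp]: "dim (A @ B) = dim A * dim B" by (simp add: dim_def)
lemma dim_Nil[simp]: "dim [] = 1" by (simp add: dim_def)

lemma psd_smult: assumes "psd n X" "0 \<le> c" shows "psd n (of_real c \<cdot>\<^sub>m X)"
proof -
  have X: "X \<in> carrier_mat n n" using assms unfolding psd_iff by auto
  have "qf n (of_real c \<cdot>\<^sub>m X) v = of_real c * qf n X v" for v
    unfolding qf_def using X by (simp add: sum_distrib_left mult_ac)
  then show ?thesis using assms X unfolding psd_iff by (auto simp: less_eq_complex_def)
qed

lemma channel_intro: assumes A: "is_sys A" and B: "is_sys B" and lin: "lin_map (dim A) (dim B) M"
  and tp: "\<forall>X\<in>carrier_mat (dim A) (dim A). mtrace (M X) = mtrace X"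
  and ps: "psd (dim B * dim A) (choi (dim A) (dim B) M)"
  shows "channel A B M"
  unfolding channel_def
proof (intro conjI allI impI)
  show "lin_map (dim A) (dim B) M" by fact
  show "\<forall>X\<in>carrier_mat (dim A) (dim A). mtrace (M X) = mtrace X" by fact
  fix n X assume X: "psd (n * dim A) X"
  have "par n (dim A) n (dim B) (\<lambda>Y. Y) M X = par n (dim A) n (dim B) (\<lambda>Y. Y) (mapC (dim A) (dim B) (choi (dim A) (dim B) M)) X"
    unfolding par_def using lin_munit_choi[OF lin] by (auto intro!: eq_matI sum.cong)
  then show "psd (n * dim B) (par n (dim A) n (dim B) (\<lambda>Y. Y) M X)"
    using mapC_CP[OF ps X dim_pos[OF A] dim_pos[OF B]] by simp
qed

lemma CD_intro: assumes F: "admissible_free_states F" and A: "is_sys A" and B: "is_sys B"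
  and lin: "lin_map (dim A) (dim B) M"
  and tp: "\<forall>X\<in>carrier_mat (dim A) (dim A). mtrace (M X) = mtrace X"
  and mem: "rchoi A B M \<in> F (B @ A)"
  shows "CD_op F A B M"
proof -
  have d: "\<forall>A. is_sys A \<longrightarrow> (\<forall>\<rho>\<in>F A. density (dim A) \<rho>)" using F unfolding admissible_free_states_def by blast
  have "is_sys (B @ A)" using A B by simp
  then have "density (dim (B @ A)) (rchoi A B M)" using d mem by blast
  then have p: "psd (dim B * dim A) (rchoi A B M)" unfolding density_def by simp
  have "choi (dim A) (dim B) M = of_real (real (dim A)) \<cdot>\<^sub>m rchoi A B M"
    unfolding rchoi_def using dim_pos[OF A] by (auto intro!: eq_matI simp: choi_def)
  then have "psd (dim B * dim A) (choi (dim A) (dim B) M)" using psd_smult[OF p, of "real (dim A)"] by simp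
  then show ?thesis unfolding CD_op_def using channel_intro[OF A B lin tp] mem by simp
qed

lemma decomp2: fixes r :: nat assumes "r < m*n" "0 < n" obtains i k where "i < m" "k < n" "r = i*n+k"
proof (rule that[of "r div n" "r mod n"])
  show "r div n < m" using assms by (simp add: less_mult_imp_div_less)
  show "r mod n < n" using assms by simp
  show "r = (r div n)*n + r mod n" by simp
qed

lemma kron_entry: assumes X: "X \<in> carrier_mat m m" and Y: "Y \<in> carrier_mat n n"
  and "i < m" "j < m" "k < n" "l < n"
  shows "kron X Y $$ (i*n+k, j*n+l) = X$$(i,j) * Y$$(k,l)"
  using assms idx_lt[of i m k n] idx_lt[of j m l n] unfolding kron_def by simp

lemma kron_carrier: "X \<in> carrier_mat m m \<Longrightarrow> Y \<in> carrier_mat n n \<Longrightarrow> kron X Y \<in> carrier_mat (m*n) (m*n)"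
  unfolding kron_def by simp

lemma swap_idx_eq: "b < dB \<Longrightarrow> c < dC \<Longrightarrow> d < dD \<Longrightarrow>
  swap_idx dB dC dD (((a*dC + c)*dB + b)*dD + d) = ((a*dB + b)*dC + c)*dD + d"
  unfolding swap_idx_def Let_def by simp

lemma swap_mid_entry: "r < dA*dC*dB*dD \<Longrightarrow> s < dA*dC*dB*dD \<Longrightarrow>
  swap_mid dA dB dC dD X $$ (r,s) = X $$ (swap_idx dB dC dD r, swap_idx dB dC dD s)"
  unfolding swap_mid_def by simp

lemma swap_mid_carrier: "swap_mid dA dB dC dD X \<in> carrier_mat (dA*dC*dB*dD) (dA*dC*dB*dD)"
  unfolding swap_mid_def by simp

lemma mult_entry: assumes "A \<in> carrier_mat n m" "B \<in> carrier_mat m k" "i < n" "j < k"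
  shows "(A * B) $$ (i,j) = (\<Sum>z<m. A$$(i,z) * B$$(z,j))"
  using assms by (simp add: scalar_prod_def atLeast0LessThan)

lemma ptrace_snd_dims[simp]: "dim_row (ptrace_snd d1 d2 X) = d1" "dim_col (ptrace_snd d1 d2 X) = d1"
  unfolding ptrace_snd_def by simp_all
lemma ptrace_fst_dims[simp]: "dim_row (ptrace_fst d1 d2 X) = d2" "dim_col (ptrace_fst d1 d2 X) = d2"
  unfolding ptrace_fst_def by simp_all

lemma link_entry: assumes mu: "\<mu> \<in> carrier_mat (dB*dA) (dB*dA)" and rho: "\<rho> \<in> carrier_mat dA dA"
  and b: "b < dB" "b' < dB" and dA: "0 < dA"
  shows "ptrace_snd dB dA (\<mu> * kron (1\<^sub>m dB) (transpose_mat \<rho>)) $$ (b,b') =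
    (\<Sum>k<dA. \<Sum>l<dA. \<rho>$$(k,l) * \<mu>$$(b*dA+k, b'*dA+l))"
proof -
  have K: "kron (1\<^sub>m dB) (transpose_mat \<rho>) \<in> carrier_mat (dB*dA) (dB*dA)"
    using kron_carrier[of "1\<^sub>m dB" dB "transpose_mat \<rho>" dA] rho by simp
  have "ptrace_snd dB dA (\<mu> * kron (1\<^sub>m dB) (transpose_mat \<rho>)) $$ (b,b') =
     (\<Sum>k<dA. (\<mu> * kron (1\<^sub>m dB) (transpose_mat \<rho>)) $$ (b*dA+k, b'*dA+k))"
    unfolding ptrace_snd_def using b by simp
  also have "\<dots> = (\<Sum>k<dA. \<Sum>c<dB. \<Sum>l<dA. \<mu>$$(b*dA+k, c*dA+l) * kron (1\<^sub>m dB) (transpose_mat \<rho>) $$ (c*dA+l, b'*dA+k))"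
    by (intro sum.cong refl, subst mult_entry[OF mu K], insert b, auto simp: idx_lt sum_split)
  also have "\<dots> = (\<Sum>k<dA. \<Sum>c<dB. \<Sum>l<dA. \<mu>$$(b*dA+k, c*dA+l) * ((if c = b' then 1 else 0) * \<rho>$$(k,l)))"
    by (intro sum.cong refl, subst kron_entry, insert b rho, auto)
  also have "\<dots> = (\<Sum>k<dA. \<Sum>l<dA. \<rho>$$(k,l) * \<mu>$$(b*dA+k, b'*dA+l))"
    using b by (simp add: if0_mult mult_if0 sum_if0_out mult_ac)
  finally show ?thesis .
qed


lemma adm_density: "admissible_free_states F \<Longrightarrow> is_sys A \<Longrightarrow> \<rho> \<in> F A \<Longrightarrow> density (dim A) \<rho>"
  unfolding admissible_free_states_def by blast
lemma adm_carrier: "admissible_free_states F \<Longrightarrow> is_sys A \<Longrightarrow> \<rho> \<in> F A \<Longrightarrow> \<rho> \<in> carrier_mat (dim A) (dim A)"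
  using adm_density unfolding density_def psd_def by blast
lemma adm_kron: "admissible_free_states F \<Longrightarrow> is_sys A \<Longrightarrow> is_sys B \<Longrightarrow> \<rho> \<in> F A \<Longrightarrow> \<sigma> \<in> F B \<Longrightarrow> kron \<rho> \<sigma> \<in> F (A @ B)"
  unfolding admissible_free_states_def by blast
lemma adm_ptrace_snd: "admissible_free_states F \<Longrightarrow> is_sys A \<Longrightarrow> is_sys B \<Longrightarrow> \<rho> \<in> F (A @ B) \<Longrightarrow> ptrace_snd (dim A) (dim B) \<rho> \<in> F A"
  unfolding admissible_free_states_def by blast
lemma adm_ptrace_fst: "admissible_free_states F \<Longrightarrow> is_sys A \<Longrightarrow> is_sys B \<Longrightarrow> \<rho> \<in> F (A @ B) \<Longrightarrow> ptrace_fst (dim A) (dim B) \<rho> \<in> F B"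
  unfolding admissible_free_states_def by blast
lemma adm_swap: "admissible_free_states F \<Longrightarrow> is_sys A \<Longrightarrow> is_sys B \<Longrightarrow> is_sys C \<Longrightarrow> is_sys D \<Longrightarrow>
   \<rho> \<in> F (A @ B @ C @ D) \<Longrightarrow> swap_mid (dim A) (dim B) (dim C) (dim D) \<rho> \<in> F (A @ C @ B @ D)"
  unfolding admissible_free_states_def by blast

lemma rchoi_id: assumes A: "is_sys A"
  shows "rchoi A A (\<lambda>X. X) = (1 / of_nat (dim A)) \<cdot>\<^sub>m Phi (dim A)"
proof -
  have d: "0 < dim A" using dim_pos[OF A] .
  show ?thesis unfolding rchoi_def
  proof (rule eq_matI)
    fix r s assume "r < dim_row ((1 / of_nat (dim A)) \<cdot>\<^sub>m Phi (dim A))" "s < dim_col ((1 / of_nat (dim A)) \<cdot>\<^sub>m Phi (dim A))"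
    then have r: "r < dim A * dim A" and s: "s < dim A * dim A" by (auto simp: Phi_def)
    have "r div dim A < dim A" "s div dim A < dim A" using r s d by (auto simp: less_mult_imp_div_less)
    then show "((1 / of_nat (dim A)) \<cdot>\<^sub>m choi (dim A) (dim A) (\<lambda>X. X)) $$ (r, s) = ((1 / of_nat (dim A)) \<cdot>\<^sub>m Phi (dim A)) $$ (r, s)"
      using r s d by (simp add: choi_def Phi_def)
  qed (auto simp: choi_def Phi_def)
qed

definition prep :: "complex mat \<Rightarrow> complex mat \<Rightarrow> complex mat" where
  "prep \<rho> X = X$$(0,0) \<cdot>\<^sub>m \<rho>"

lemma prep_CD: assumes F: "admissible_free_states F" and A: "is_sys A" and rho: "\<rho> \<in> F A"
  shows "CD_op F [] A (prep \<rho>)"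
proof -
  have c: "\<rho> \<in> carrier_mat (dim A) (dim A)" using adm_carrier[OF F A rho] .
  have tr: "mtrace \<rho> = 1" using adm_density[OF F A rho] unfolding density_def by simp
  show ?thesis
  proof (rule CD_intro[OF F is_sys_Nil A])
    show "lin_map (dim []) (dim A) (prep \<rho>)" unfolding lin_map_def prep_def using c
      by (auto intro!: eq_matI simp: distrib_right)
    show "\<forall>X\<in>carrier_mat (dim []) (dim []). mtrace (prep \<rho> X) = mtrace X"
      unfolding prep_def mtrace_def using c tr[unfolded mtrace_def]
      by (auto simp: sum_distrib_left[symmetric])
    have "rchoi [] A (prep \<rho>) = \<rho>" unfolding rchoi_def prep_def choi_def using c
      by (auto intro!: eq_matI)
    then show "rchoi [] A (prep \<rho>) \<in> F (A @ [])" using rho by simp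
  qed
qed

lemma mu_CD: assumes F: "admissible_free_states F" and A: "is_sys A" and B: "is_sys B"
  and mu: "\<mu> \<in> F (B @ A)" and pt: "ptrace_fst (dim B) (dim A) \<mu> = (1 / of_nat (dim A)) \<cdot>\<^sub>m 1\<^sub>m (dim A)"
  shows "CD_op F A B (mapC (dim A) (dim B) (of_nat (dim A) \<cdot>\<^sub>m \<mu>))"
proof -
  have d: "0 < dim A" using dim_pos[OF A] .
  have c: "\<mu> \<in> carrier_mat (dim B * dim A) (dim B * dim A)" using adm_carrier[OF F _ mu] A B by simp
  show ?thesis
  proof (rule CD_intro[OF F A B lin_mapC])
    have "ptrace_fst (dim B) (dim A) (of_nat (dim A) \<cdot>\<^sub>m \<mu>) = of_nat (dim A) \<cdot>\<^sub>m ptrace_fst (dim B) (dim A) \<mu>"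
      unfolding ptrace_fst_def using c by (auto intro!: eq_matI simp: sum_distrib_left idx_lt)
    also have "\<dots> = 1\<^sub>m (dim A)" unfolding pt using d by (auto intro!: eq_matI)
    finally show "\<forall>X\<in>carrier_mat (dim A) (dim A). mtrace (mapC (dim A) (dim B) (of_nat (dim A) \<cdot>\<^sub>m \<mu>) X) = mtrace X"
      using mapC_TP by blast
    have "rchoi A B (mapC (dim A) (dim B) (of_nat (dim A) \<cdot>\<^sub>m \<mu>)) = \<mu>"
      unfolding rchoi_def using choi_mapC[of "of_nat (dim A) \<cdot>\<^sub>m \<mu>" "dim B" "dim A"] c d
      by (auto intro!: eq_matI)
    then show "rchoi A B (mapC (dim A) (dim B) (of_nat (dim A) \<cdot>\<^sub>m \<mu>)) \<in> F (B @ A)" using mu by simp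
  qed
qed


lemma link_eq: assumes F: "admissible_free_states F" and A: "is_sys A" and B: "is_sys B"
  and rho: "\<rho> \<in> F A" and mu: "\<mu> \<in> F (B @ A)"
  shows "rchoi [] B (mapC (dim A) (dim B) (of_nat (dim A) \<cdot>\<^sub>m \<mu>) \<circ> prep \<rho>) =
    of_nat (dim A) \<cdot>\<^sub>m ptrace_snd (dim B) (dim A) (\<mu> * kron (1\<^sub>m (dim B)) (transpose_mat \<rho>))"
proof -
  have d: "0 < dim A" using dim_pos[OF A] .
  have c: "\<mu> \<in> carrier_mat (dim B * dim A) (dim B * dim A)" using adm_carrier[OF F _ mu] A B by simp
  have cr: "\<rho> \<in> carrier_mat (dim A) (dim A)" using adm_carrier[OF F A rho] .
  have pr: "prep \<rho> (munit (Suc 0) 0 0) = \<rho>" unfolding prep_def using cr by (auto intro!: eq_matI)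
  show ?thesis
  proof (rule eq_matI)
    fix r s assume "r < dim_row (of_nat (dim A) \<cdot>\<^sub>m ptrace_snd (dim B) (dim A) (\<mu> * kron (1\<^sub>m (dim B)) (transpose_mat \<rho>)))"
      "s < dim_col (of_nat (dim A) \<cdot>\<^sub>m ptrace_snd (dim B) (dim A) (\<mu> * kron (1\<^sub>m (dim B)) (transpose_mat \<rho>)))"
    then have r: "r < dim B" and s: "s < dim B" by (auto simp: ptrace_snd_def)
    show "rchoi [] B (mapC (dim A) (dim B) (of_nat (dim A) \<cdot>\<^sub>m \<mu>) \<circ> prep \<rho>) $$ (r, s) =
      (of_nat (dim A) \<cdot>\<^sub>m ptrace_snd (dim B) (dim A) (\<mu> * kron (1\<^sub>m (dim B)) (transpose_mat \<rho>))) $$ (r, s)"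
    proof -
      have "rchoi [] B (mapC (dim A) (dim B) (of_nat (dim A) \<cdot>\<^sub>m \<mu>) \<circ> prep \<rho>) $$ (r, s)
        = (\<Sum>k<dim A. \<Sum>l<dim A. \<rho> $$ (k,l) * ((of_nat (dim A) \<cdot>\<^sub>m \<mu>) $$ (r * dim A + k, s * dim A + l)))"
        using r s unfolding rchoi_def choi_def by (simp add: pr mapC_def)
      also have "\<dots> = (\<Sum>k<dim A. \<Sum>l<dim A. of_nat (dim A) * (\<rho> $$ (k,l) * \<mu> $$ (r * dim A + k, s * dim A + l)))"
        using r s c by (intro sum.cong refl) (simp add: idx_lt)
      also have "\<dots> = (of_nat (dim A) \<cdot>\<^sub>m ptrace_snd (dim B) (dim A) (\<mu> * kron (1\<^sub>m (dim B)) (transpose_mat \<rho>))) $$ (r, s)"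
        using r s by (simp add: link_entry[OF c cr r s d] sum_distrib_left)
      finally show ?thesis .
    qed
  qed (auto simp: rchoi_def choi_def ptrace_snd_def)
qed

lemma forward: assumes F: "admissible_free_states F" and R: "CD_resource_theory F"
  shows "(\<forall>A. is_sys A \<longrightarrow> (1 / of_nat (dim A)) \<cdot>\<^sub>m Phi (dim A) \<in> F (A @ A)) \<and>
     (\<forall>A B. is_sys A \<longrightarrow> is_sys B \<longrightarrow>
        (\<forall>\<rho>\<in>F A. \<forall>\<mu>\<in>F (B @ A).
           ptrace_fst (dim B) (dim A) \<mu> = (1 / of_nat (dim A)) \<cdot>\<^sub>m 1\<^sub>m (dim A) \<longrightarrow>
           of_nat (dim A) \<cdot>\<^sub>m
             ptrace_snd (dim B) (dim A) (\<mu> * kron (1\<^sub>m (dim B)) (transpose_mat \<rho>)) \<in> F B))"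
proof (intro conjI allI impI ballI)
  fix A assume A: "is_sys A"
  have "CD_op F A A (\<lambda>X. X)" using R A unfolding CD_resource_theory_def by blast
  then show "(1 / of_nat (dim A)) \<cdot>\<^sub>m Phi (dim A) \<in> F (A @ A)"
    unfolding CD_op_def rchoi_id[OF A] by blast
next
  fix A B \<rho> \<mu> assume A: "is_sys A" and B: "is_sys B" and rho: "\<rho> \<in> F A" and mu: "\<mu> \<in> F (B @ A)"
    and pt: "ptrace_fst (dim B) (dim A) \<mu> = (1 / of_nat (dim A)) \<cdot>\<^sub>m 1\<^sub>m (dim A)"
  have comp: "\<And>A B C M N. is_sys A \<Longrightarrow> is_sys B \<Longrightarrow> is_sys C \<Longrightarrow>
        CD_op F A B M \<Longrightarrow> CD_op F B C N \<Longrightarrow> CD_op F A C (N \<circ> M)"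
    using R unfolding CD_resource_theory_def by blast
  have "CD_op F [] B (mapC (dim A) (dim B) (of_nat (dim A) \<cdot>\<^sub>m \<mu>) \<circ> prep \<rho>)"
    by (rule comp[OF is_sys_Nil A B prep_CD[OF F A rho] mu_CD[OF F A B mu pt]])
  then have "rchoi [] B (mapC (dim A) (dim B) (of_nat (dim A) \<cdot>\<^sub>m \<mu>) \<circ> prep \<rho>) \<in> F (B @ [])"
    unfolding CD_op_def by blast
  then show "of_nat (dim A) \<cdot>\<^sub>m ptrace_snd (dim B) (dim A) (\<mu> * kron (1\<^sub>m (dim B)) (transpose_mat \<rho>)) \<in> F B"
    unfolding link_eq[OF F A B rho mu] by simp
qed

lemma id_CD: assumes F: "admissible_free_states F" and A: "is_sys A"
  and H1: "(1 / of_nat (dim A)) \<cdot>\<^sub>m Phi (dim A) \<in> F (A @ A)"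
  shows "CD_op F A A (\<lambda>X. X)"
  by (rule CD_intro[OF F A A]) (auto simp: lin_map_def rchoi_id[OF A] H1)

lemma swap_idx_lt: "r < dB*dA \<Longrightarrow> 0 < dA \<Longrightarrow> (r mod dA)*dB + r div dA < dA*(dB::nat)"
  by (rule idx_lt) (auto simp: less_mult_imp_div_less)

lemma swap_lin: assumes "0 < dA" "0 < dB" shows "lin_map (dA*dB) (dB*dA) (swap_mat dA dB)"
  unfolding lin_map_def swap_mat_def using assms swap_idx_lt[of _ dB dA]
  by (auto intro!: eq_matI)

lemma swap_TP: assumes dA: "0 < dA" and X: "X \<in> carrier_mat (dA*dB) (dA*dB)"
  shows "mtrace (swap_mat dA dB X) = mtrace X"
proof -
  have "mtrace (swap_mat dA dB X) = (\<Sum>r<dB*dA. X $$ ((r mod dA)*dB + r div dA, (r mod dA)*dB + r div dA))"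
    unfolding mtrace_def swap_mat_def by simp
  also have "\<dots> = (\<Sum>c<dB. \<Sum>b<dA. X $$ (b*dB + c, b*dB + c))"
    unfolding sum_split by simp
  also have "\<dots> = (\<Sum>b<dA. \<Sum>c<dB. X $$ (b*dB + c, b*dB + c))"
    by (rule sum.swap)
  also have "\<dots> = mtrace X" unfolding mtrace_def using X by (simp add: sum_split)
  finally show ?thesis .
qed

lemma swap_rchoi: assumes A: "is_sys A" and B: "is_sys B"
  shows "rchoi (A @ B) (B @ A) (swap_mat (dim A) (dim B)) =
    swap_mid 1 (dim A) (dim B) (dim A * dim B) ((1 / of_nat (dim A * dim B)) \<cdot>\<^sub>m Phi (dim A * dim B))"
proof -
  define a where "a = dim A"
  define b where "b = dim B"
  have a: "0 < a" and b: "0 < b" using dim_pos[OF A] dim_pos[OF B] a_def b_def by auto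
  have ab: "0 < a * b" using a b by simp
  show ?thesis unfolding a_def[symmetric] b_def[symmetric] dim_append
  proof (rule eq_matI)
    fix R S assume "R < dim_row (swap_mid 1 a b (a * b) ((1 / of_nat (a * b)) \<cdot>\<^sub>m Phi (a * b)))"
      "S < dim_col (swap_mid 1 a b (a * b) ((1 / of_nat (a * b)) \<cdot>\<^sub>m Phi (a * b)))"
    then have R: "R < (b*a)*(a*b)" and S: "S < (b*a)*(a*b)" by (auto simp: swap_mid_def mult_ac)
    obtain x y where x: "x < b*a" and y: "y < a*b" and Rxy: "R = x*(a*b)+y" using decomp2[OF R ab] .
    obtain c1 b1 where c1: "c1 < b" and b1: "b1 < a" and xcb: "x = c1*a + b1" using decomp2[OF x a] .
    obtain x' y' where x': "x' < b*a" and y': "y' < a*b" and Sxy: "S = x'*(a*b)+y'" using decomp2[OF S ab] .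
    obtain c1' b1' where c1': "c1' < b" and b1': "b1' < a" and xcb': "x' = c1'*a + b1'" using decomp2[OF x' a] .
    have Rf: "R = ((0*b + c1)*a + b1)*(a*b) + y" using Rxy xcb by simp
    have Sf: "S = ((0*b + c1')*a + b1')*(a*b) + y'" using Sxy xcb' by simp
    have i1: "(b1*b + c1) < a*b" "(b1'*b + c1') < a*b" using idx_lt b1 c1 b1' c1' by auto
    have i2: "(b1*b + c1)*(a*b) + y < (a*b)*(a*b)" "(b1'*b + c1')*(a*b) + y' < (a*b)*(a*b)"
      using idx_lt i1 y y' by auto
    have R1: "R < 1*b*a*(a*b)" and S1: "S < 1*b*a*(a*b)" using R S by simp_all
    have si: "swap_idx a b (a*b) R = (b1*b + c1)*(a*b) + y"
      using swap_idx_eq[of b1 a c1 b y "a*b" 0] b1 c1 y unfolding Rxy xcb by simp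
    have si': "swap_idx a b (a*b) S = (b1'*b + c1')*(a*b) + y'"
      using swap_idx_eq[of b1' a c1' b y' "a*b" 0] b1' c1' y' unfolding Sxy xcb' by simp
    have "swap_mid 1 a b (a * b) ((1 / of_nat (a * b)) \<cdot>\<^sub>m Phi (a * b)) $$ (R, S)
      = ((1 / of_nat (a * b)) \<cdot>\<^sub>m Phi (a * b)) $$ ((b1*b + c1)*(a*b) + y, (b1'*b + c1')*(a*b) + y')"
      unfolding swap_mid_entry[OF R1 S1] si si' ..
    also have "\<dots> = (1 / of_nat (a * b)) * (if b1*b + c1 = y \<and> b1'*b + c1' = y' then 1 else 0)"
      using i2 y y' by (simp add: Phi_def)
    also have "\<dots> = rchoi (A @ B) (B @ A) (swap_mat a b) $$ (R, S)"
    proof -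
      have xl: "x < b * a" "x' < b*a" by fact+
      have "rchoi (A @ B) (B @ A) (swap_mat a b) $$ (R, S) = (1 / of_nat (a * b)) *
          swap_mat a b (munit (a*b) y y') $$ (x, x')"
        unfolding rchoi_def choi_def dim_append a_def[symmetric] b_def[symmetric] Rxy Sxy
        using R[unfolded Rxy] S[unfolded Sxy] y y' by simp
      also have "\<dots> = (1 / of_nat (a * b)) * (if b1*b + c1 = y \<and> b1'*b + c1' = y' then 1 else 0)"
        unfolding swap_mat_def using xl i1 y y' b1 b1' unfolding xcb xcb' by (simp add: mult_ac)
      finally show ?thesis by simp
    qed
    finally show "rchoi (A @ B) (B @ A) (swap_mat a b) $$ (R, S) =
       swap_mid 1 a b (a * b) ((1 / of_nat (a * b)) \<cdot>\<^sub>m Phi (a * b)) $$ (R, S)" by simp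
  qed (auto simp: rchoi_def choi_def swap_mid_def a_def b_def mult_ac)
qed


lemma swap_CD: assumes F: "admissible_free_states F" and A: "is_sys A" and B: "is_sys B"
  and H1: "(1 / of_nat (dim (A @ B))) \<cdot>\<^sub>m Phi (dim (A @ B)) \<in> F ((A @ B) @ (A @ B))"
  shows "CD_op F (A @ B) (B @ A) (swap_mat (dim A) (dim B))"
proof (rule CD_intro[OF F])
  show "is_sys (A @ B)" "is_sys (B @ A)" using A B by auto
  show "lin_map (dim (A @ B)) (dim (B @ A)) (swap_mat (dim A) (dim B))"
    using swap_lin[OF dim_pos[OF A] dim_pos[OF B]] by simp
  show "\<forall>X\<in>carrier_mat (dim (A @ B)) (dim (A @ B)). mtrace (swap_mat (dim A) (dim B) X) = mtrace X"
    using swap_TP[OF dim_pos[OF A]] by simp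
  have "swap_mid (dim []) (dim A) (dim B) (dim (A @ B)) ((1 / of_nat (dim (A @ B))) \<cdot>\<^sub>m Phi (dim (A @ B))) \<in> F ([] @ B @ A @ (A @ B))"
    by (rule adm_swap[OF F is_sys_Nil A B]) (use A B H1 in auto)
  then show "rchoi (A @ B) (B @ A) (swap_mat (dim A) (dim B)) \<in> F ((B @ A) @ A @ B)"
    unfolding swap_rchoi[OF A B] by simp
qed

lemma idx_eq_iff[simp]: "k < n \<Longrightarrow> l < (n::nat) \<Longrightarrow> (i*n+k = j*n+l) \<longleftrightarrow> (i = j \<and> k = l)"
  by (metis idx_div idx_mod)

lemma if0_div: "(if P then x else 0) / (c::complex) = (if P then x / c else 0)" by simp

lemma ptrace_fst_Phi: "0 < b \<Longrightarrow> ptrace_fst b b ((1 / of_nat b) \<cdot>\<^sub>m Phi b) = (1 / of_nat b) \<cdot>\<^sub>m 1\<^sub>m b"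
proof (rule eq_matI)
  fix i j assume "0 < b" "i < dim_row ((1 / of_nat b) \<cdot>\<^sub>m 1\<^sub>m b)" "j < dim_col ((1 / of_nat b) \<cdot>\<^sub>m (1\<^sub>m b :: complex mat))"
  then have b: "0 < b" and i: "i < b" and j: "j < b" by auto
  have "ptrace_fst b b ((1 / of_nat b) \<cdot>\<^sub>m Phi b) $$ (i,j) = (\<Sum>k<b. (1 / of_nat b) * (if k = i \<and> k = j then 1 else 0))"
    unfolding ptrace_fst_def using i j by (auto simp: Phi_def idx_lt intro!: sum.cong)
  also have "\<dots> = ((1 / of_nat b) \<cdot>\<^sub>m 1\<^sub>m b) $$ (i,j)" using i j by (simp add: if_and0 sum_if0_out if0_div)
  finally show "ptrace_fst b b ((1 / of_nat b) \<cdot>\<^sub>m Phi b) $$ (i,j) = ((1 / of_nat b) \<cdot>\<^sub>m 1\<^sub>m b) $$ (i,j)" .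
qed auto

lemma ptrace_lin: assumes "0 < b" shows "lin_map (a*b) a (ptrace_snd a b)"
  unfolding lin_map_def ptrace_snd_def using assms idx_lt[of _ a _ b]
  by (auto intro!: eq_matI simp: sum.distrib sum_distrib_left)

lemma ptrace_TP: assumes X: "X \<in> carrier_mat (a*b) (a*b)"
  shows "mtrace (ptrace_snd a b X) = mtrace X"
  unfolding mtrace_def ptrace_snd_def using X by (simp add: sum_split)

lemma discard_rchoi: assumes A: "is_sys A" and B: "is_sys B"
  shows "rchoi (A @ B) A (ptrace_snd (dim A) (dim B)) =
    kron ((1 / of_nat (dim A)) \<cdot>\<^sub>m Phi (dim A)) ((1 / of_nat (dim B)) \<cdot>\<^sub>m 1\<^sub>m (dim B))"
proof -
  define a where "a = dim A"
  define b where "b = dim B"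
  have a: "0 < a" and b: "0 < b" using dim_pos[OF A] dim_pos[OF B] a_def b_def by auto
  have ab: "0 < a * b" using a b by simp
  show ?thesis unfolding a_def[symmetric] b_def[symmetric]
  proof (rule eq_matI)
    fix R S assume "R < dim_row (kron ((1 / of_nat a) \<cdot>\<^sub>m Phi a) ((1 / of_nat b) \<cdot>\<^sub>m 1\<^sub>m b))"
      "S < dim_col (kron ((1 / of_nat a) \<cdot>\<^sub>m Phi a) ((1 / of_nat b) \<cdot>\<^sub>m 1\<^sub>m b))"
    then have R: "R < a*(a*b)" and S: "S < a*(a*b)" by (auto simp: kron_def Phi_def mult_ac)
    obtain x y where x: "x < a" and y: "y < a*b" and Rxy: "R = x*(a*b)+y" using decomp2[OF R ab] .
    obtain a1 b1 where a1: "a1 < a" and b1: "b1 < b" and yab: "y = a1*b + b1" using decomp2[OF y b] .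
    obtain x' y' where x': "x' < a" and y': "y' < a*b" and Sxy: "S = x'*(a*b)+y'" using decomp2[OF S ab] .
    obtain a1' b1' where a1': "a1' < a" and b1': "b1' < b" and yab': "y' = a1'*b + b1'" using decomp2[OF y' b] .
    have Rf: "R = (x*a + a1)*b + b1" unfolding Rxy yab by (simp add: algebra_simps)
    have Sf: "S = (x'*a + a1')*b + b1'" unfolding Sxy yab' by (simp add: algebra_simps)
    have i1: "x*a + a1 < a*a" "x'*a + a1' < a*a" using idx_lt x a1 x' a1' by auto
    have "kron ((1 / of_nat a) \<cdot>\<^sub>m Phi a) ((1 / of_nat b) \<cdot>\<^sub>m 1\<^sub>m b) $$ (R, S)
       = ((1 / of_nat a) \<cdot>\<^sub>m Phi a) $$ (x*a + a1, x'*a + a1') * ((1 / of_nat b) \<cdot>\<^sub>m 1\<^sub>m b) $$ (b1, b1')"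
      unfolding Rf Sf by (rule kron_entry) (auto simp: Phi_def i1 b1 b1')
    also have "\<dots> = (1 / of_nat a) * (if x = a1 \<and> x' = a1' then 1 else 0) * ((1 / of_nat b) * (if b1 = b1' then 1 else 0))"
      using i1 b1 b1' x a1 x' a1' by (simp add: Phi_def)
    also have "\<dots> = rchoi (A @ B) A (ptrace_snd a b) $$ (R, S)"
    proof -
      have "rchoi (A @ B) A (ptrace_snd a b) $$ (R, S) = (1 / of_nat (a * b)) *
          ptrace_snd a b (munit (a*b) y y') $$ (x, x')"
        unfolding rchoi_def choi_def dim_append a_def[symmetric] b_def[symmetric] Rxy Sxy
        using R[unfolded Rxy] S[unfolded Sxy] y y' by simp
      also have "\<dots> = (1 / of_nat (a * b)) * (\<Sum>k<b. if x = a1 \<and> k = b1 \<and> x' = a1' \<and> k = b1' then 1 else 0)"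
        unfolding ptrace_snd_def using x x' idx_lt[of x a _ b] idx_lt[of x' a _ b] b1 b1' unfolding yab yab'
        by (auto intro!: sum.cong)
      also have "\<dots> = (1 / of_nat a) * (if x = a1 \<and> x' = a1' then 1 else 0) * ((1 / of_nat b) * (if b1 = b1' then 1 else 0))"
        using b1 by (auto simp: if_and0 sum_if0_out)
      finally show ?thesis by simp
    qed
    finally show "rchoi (A @ B) A (ptrace_snd a b) $$ (R, S) =
       kron ((1 / of_nat a) \<cdot>\<^sub>m Phi a) ((1 / of_nat b) \<cdot>\<^sub>m 1\<^sub>m b) $$ (R, S)" by simp
  qed (auto simp: rchoi_def choi_def kron_def Phi_def a_def b_def mult_ac)
qed

lemma discard_CD: assumes F: "admissible_free_states F" and A: "is_sys A" and B: "is_sys B"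
  and H1: "\<forall>A. is_sys A \<longrightarrow> (1 / of_nat (dim A)) \<cdot>\<^sub>m Phi (dim A) \<in> F (A @ A)"
  shows "CD_op F (A @ B) A (ptrace_snd (dim A) (dim B))"
proof (rule CD_intro[OF F])
  show "is_sys (A @ B)" using A B by auto
  show "is_sys A" by fact
  show "lin_map (dim (A @ B)) (dim A) (ptrace_snd (dim A) (dim B))"
    using ptrace_lin[OF dim_pos[OF B]] by simp
  show "\<forall>X\<in>carrier_mat (dim (A @ B)) (dim (A @ B)). mtrace (ptrace_snd (dim A) (dim B) X) = mtrace X"
    using ptrace_TP by simp
  have pA: "(1 / of_nat (dim A)) \<cdot>\<^sub>m Phi (dim A) \<in> F (A @ A)" using H1 A by blast
  have "ptrace_fst (dim B) (dim B) ((1 / of_nat (dim B)) \<cdot>\<^sub>m Phi (dim B)) \<in> F B"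
    by (rule adm_ptrace_fst[OF F B B]) (use H1 B in blast)
  then have pB: "(1 / of_nat (dim B)) \<cdot>\<^sub>m 1\<^sub>m (dim B) \<in> F B" unfolding ptrace_fst_Phi[OF dim_pos[OF B]] .
  have "kron ((1 / of_nat (dim A)) \<cdot>\<^sub>m Phi (dim A)) ((1 / of_nat (dim B)) \<cdot>\<^sub>m 1\<^sub>m (dim B)) \<in> F ((A @ A) @ B)"
    by (rule adm_kron[OF F _ B pA pB]) (use A in simp)
  then show "rchoi (A @ B) A (ptrace_snd (dim A) (dim B)) \<in> F (A @ A @ B)"
    unfolding discard_rchoi[OF A B] by simp
qed

lemma Phi_entry: "a < n \<Longrightarrow> a1 < n \<Longrightarrow> a' < n \<Longrightarrow> a1' < n \<Longrightarrow>
  ((1 / of_nat n) \<cdot>\<^sub>m Phi n) $$ (a*n + a1, a'*n + a1') = (1 / of_nat n) * (if a = a1 \<and> a' = a1' then 1 else 0)"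
  using idx_lt[of a n a1 n] idx_lt[of a' n a1' n] by (simp add: Phi_def)

lemma idx_lt4: "c < nC \<Longrightarrow> a < nA \<Longrightarrow> b < nB \<Longrightarrow> a1 < (nD::nat) \<Longrightarrow> ((c*nA + a)*nB + b)*nD + a1 < nC*nA*nB*nD"
  by (intro idx_lt) auto

lemma mup_entry: assumes nu: "\<nu> \<in> carrier_mat (nC*nB) (nC*nB)" and nA: "0 < nA"
  and c: "c < nC" "c' < nC" and a: "a < nA" "a' < nA" and b: "b < nB" "b' < nB" and a1: "a1 < nA" "a1' < nA"
  shows "swap_mid nC nB nA nA (kron \<nu> ((1 / of_nat nA) \<cdot>\<^sub>m Phi nA)) $$
      (((c*nA + a)*nB + b)*nA + a1, ((c'*nA + a')*nB + b')*nA + a1') =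
    \<nu> $$ (c*nB + b, c'*nB + b') * ((1 / of_nat nA) * (if a = a1 \<and> a' = a1' then 1 else 0))"
proof -
  have e1: "((c*nB + b)*nA + a)*nA + a1 = (c*nB + b)*(nA*nA) + (a*nA + a1)" for c b a a1 :: nat
    by (simp add: algebra_simps)
  have ph: "(1 / of_nat nA) \<cdot>\<^sub>m Phi nA \<in> carrier_mat (nA*nA) (nA*nA)" by (simp add: Phi_def)
  show ?thesis
    unfolding swap_mid_entry[OF idx_lt4[OF c(1) a(1) b(1) a1(1)] idx_lt4[OF c(2) a(2) b(2) a1(2)]]
    unfolding swap_idx_eq[OF b(1) a(1) a1(1)] swap_idx_eq[OF b(2) a(2) a1(2)] e1
    by (subst kron_entry[OF nu ph]) (use c a b a1 idx_lt in \<open>auto simp: Phi_entry\<close>)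
qed


lemma e2: "(c*nA + a)*(nB*nA) + (b*nA + a2) = ((c*nA + a)*nB + b)*nA + (a2::nat)"
  by (simp add: algebra_simps)

lemma comp_ptrace: assumes nu: "\<nu> \<in> carrier_mat (nC*nB) (nC*nB)" and nA: "0 < nA" and nB: "0 < nB"
  and pt: "ptrace_fst nC nB \<nu> = (1 / of_nat nB) \<cdot>\<^sub>m 1\<^sub>m nB"
  shows "ptrace_fst (nC*nA) (nB*nA) (swap_mid nC nB nA nA (kron \<nu> ((1 / of_nat nA) \<cdot>\<^sub>m Phi nA)))
     = (1 / of_nat (nB*nA)) \<cdot>\<^sub>m 1\<^sub>m (nB*nA)"
proof (rule eq_matI)
  fix x y assume "x < dim_row ((1 / of_nat (nB*nA)) \<cdot>\<^sub>m (1\<^sub>m (nB*nA) :: complex mat))"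
    "y < dim_col ((1 / of_nat (nB*nA)) \<cdot>\<^sub>m (1\<^sub>m (nB*nA) :: complex mat))"
  then have x: "x < nB*nA" and y: "y < nB*nA" by auto
  obtain b a2 where b: "b < nB" and a2: "a2 < nA" and xe: "x = b*nA + a2" using decomp2[OF x nA] .
  obtain b' a2' where b': "b' < nB" and a2': "a2' < nA" and ye: "y = b'*nA + a2'" using decomp2[OF y nA] .
  let ?M = "swap_mid nC nB nA nA (kron \<nu> ((1 / of_nat nA) \<cdot>\<^sub>m Phi nA))"
  have "ptrace_fst (nC*nA) (nB*nA) ?M $$ (x,y) = (\<Sum>i<nC*nA. ?M $$ (i*(nB*nA) + x, i*(nB*nA) + y))"
    unfolding ptrace_fst_def using x y by simp
  also have "\<dots> = (\<Sum>c<nC. \<Sum>a<nA. \<nu> $$ (c*nB + b, c*nB + b') * ((1 / of_nat nA) * (if a = a2 \<and> a = a2' then 1 else 0)))"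
    unfolding sum_split xe ye e2
    by (intro sum.cong refl, rule mup_entry[OF nu nA]) (use b b' a2 a2' in auto)
  also have "\<dots> = (\<Sum>c<nC. \<nu> $$ (c*nB + b, c*nB + b')) * ((1 / of_nat nA) * (if a2 = a2' then 1 else 0))"
    using a2 by (simp add: if_and0 sum_if0_out mult_if0 sum_distrib_right sum_divide_distrib)
  also have "(\<Sum>c<nC. \<nu> $$ (c*nB + b, c*nB + b')) = ptrace_fst nC nB \<nu> $$ (b,b')"
    unfolding ptrace_fst_def using b b' by simp
  also have "\<dots> = (1 / of_nat nB) * (if b = b' then 1 else 0)" unfolding pt using b b' by simp
  also have "(1 / of_nat nB) * (if b = b' then 1 else 0) * ((1 / of_nat nA) * (if a2 = a2' then 1 else 0))
      = ((1 / of_nat (nB*nA)) \<cdot>\<^sub>m (1\<^sub>m (nB*nA) :: complex mat)) $$ (x,y)"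
    using x y b b' a2 a2' unfolding xe ye by auto
  finally show "ptrace_fst (nC*nA) (nB*nA) ?M $$ (x,y) = ((1 / of_nat (nB*nA)) \<cdot>\<^sub>m (1\<^sub>m (nB*nA) :: complex mat)) $$ (x,y)" .
qed auto


lemma rchoi_entry: assumes "0 < dim A" "b < dim B" "b' < dim B" "a < dim A" "a' < dim A"
  shows "rchoi A B M $$ (b*dim A + a, b'*dim A + a') = (1 / of_nat (dim A)) * M (munit (dim A) a a') $$ (b,b')"
  using assms idx_lt[of b "dim B" a "dim A"] idx_lt[of b' "dim B" a' "dim A"]
  unfolding rchoi_def choi_def by simp

lemma rchoi_carrier: "rchoi A B M \<in> carrier_mat (dim B * dim A) (dim B * dim A)"
  unfolding rchoi_def choi_def by simp

lemma comp_rchoi: assumes A: "is_sys A" and B: "is_sys B" and C: "is_sys C"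
  and linM: "lin_map (dim A) (dim B) M" and linN: "lin_map (dim B) (dim C) N"
  shows "rchoi A C (N \<circ> M) = of_nat (dim B * dim A) \<cdot>\<^sub>m ptrace_snd (dim C * dim A) (dim B * dim A)
     (swap_mid (dim C) (dim B) (dim A) (dim A) (kron (rchoi B C N) ((1 / of_nat (dim A)) \<cdot>\<^sub>m Phi (dim A)))
       * kron (1\<^sub>m (dim C * dim A)) (transpose_mat (rchoi A B M)))"
proof -
  define nA where "nA = dim A"
  define nB where "nB = dim B"
  define nC where "nC = dim C"
  have nA: "0 < nA" and nB: "0 < nB" and nC: "0 < nC" using dim_pos A B C nA_def nB_def nC_def by auto
  define \<nu> where "\<nu> = rchoi B C N"
  define \<mu> where "\<mu> = rchoi A B M"
  define M' where "M' = swap_mid nC nB nA nA (kron \<nu> ((1 / of_nat nA) \<cdot>\<^sub>m Phi nA))"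
  have nuc: "\<nu> \<in> carrier_mat (nC*nB) (nC*nB)" unfolding \<nu>_def nB_def nC_def by (rule rchoi_carrier)
  have muc: "\<mu> \<in> carrier_mat (nB*nA) (nB*nA)" unfolding \<mu>_def nB_def nA_def by (rule rchoi_carrier)
  have M'c: "M' \<in> carrier_mat ((nC*nA)*(nB*nA)) ((nC*nA)*(nB*nA))"
    using swap_mid_carrier[of nC nB nA nA] unfolding M'_def by (simp add: mult_ac)
  have Mc: "M (munit nA a a') \<in> carrier_mat nB nB" for a a'
    using linM unfolding lin_map_def nA_def nB_def by simp
  show ?thesis unfolding nA_def[symmetric] nB_def[symmetric] nC_def[symmetric] \<nu>_def[symmetric] \<mu>_def[symmetric]
    M'_def[symmetric]
  proof (rule eq_matI)
    fix X Y assume "X < dim_row (of_nat (nB*nA) \<cdot>\<^sub>m ptrace_snd (nC*nA) (nB*nA) (M' * kron (1\<^sub>m (nC*nA)) (transpose_mat \<mu>)))"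
      "Y < dim_col (of_nat (nB*nA) \<cdot>\<^sub>m ptrace_snd (nC*nA) (nB*nA) (M' * kron (1\<^sub>m (nC*nA)) (transpose_mat \<mu>)))"
    then have X: "X < nC*nA" and Y: "Y < nC*nA" by auto
    obtain c a where c: "c < nC" and a: "a < nA" and Xe: "X = c*nA + a" using decomp2[OF X nA] .
    obtain c' a' where c': "c' < nC" and a': "a' < nA" and Ye: "Y = c'*nA + a'" using decomp2[OF Y nA] .
    define S where "S = (\<Sum>b<nB. \<Sum>b'<nB. M (munit nA a a') $$ (b,b') * N (munit nB b b') $$ (c,c'))"
    have "(of_nat (nB*nA) \<cdot>\<^sub>m ptrace_snd (nC*nA) (nB*nA) (M' * kron (1\<^sub>m (nC*nA)) (transpose_mat \<mu>))) $$ (X,Y)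
       = of_nat (nB*nA) * (\<Sum>k<nB*nA. \<Sum>l<nB*nA. \<mu>$$(k,l) * M'$$(X*(nB*nA)+k, Y*(nB*nA)+l))"
      using X Y link_entry[OF M'c muc X Y] nA nB by simp
    also have "(\<Sum>k<nB*nA. \<Sum>l<nB*nA. \<mu>$$(k,l) * M'$$(X*(nB*nA)+k, Y*(nB*nA)+l))
      = (\<Sum>b<nB. \<Sum>a1<nA. \<Sum>b'<nB. \<Sum>a1'<nA. \<mu>$$(b*nA+a1, b'*nA+a1') *
           (\<nu> $$ (c*nB + b, c'*nB + b') * ((1 / of_nat nA) * (if a = a1 \<and> a' = a1' then 1 else 0))))"
      unfolding sum_split Xe Ye e2 M'_def
      by (intro sum.cong refl, subst mup_entry[OF nuc nA]) (use c c' a a' in auto)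
    also have "\<dots> = (1 / of_nat nA) * (\<Sum>b<nB. \<Sum>b'<nB. \<mu>$$(b*nA+a, b'*nA+a') * \<nu> $$ (c*nB + b, c'*nB + b'))"
      using a a' by (simp add: if_and0 sum_if0_out mult_if0 if0_mult, simp add: sum_distrib_left mult_ac sum_divide_distrib)
    also have "(\<Sum>b<nB. \<Sum>b'<nB. \<mu>$$(b*nA+a, b'*nA+a') * \<nu> $$ (c*nB + b, c'*nB + b'))
      = (\<Sum>b<nB. \<Sum>b'<nB. ((1 / of_nat nA) * M (munit nA a a') $$ (b,b')) * ((1 / of_nat nB) * N (munit nB b b') $$ (c,c')))"
    proof -
      have e1: "\<mu> $$ (b*nA+a, b'*nA+a') = (1 / of_nat nA) * M (munit nA a a') $$ (b,b')" if "b < nB" "b' < nB" for b b'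
        using rchoi_entry[of A b B b' a a' M] that a a' nA unfolding \<mu>_def nA_def nB_def by simp
      have e2: "\<nu> $$ (c*nB+b, c'*nB+b') = (1 / of_nat nB) * N (munit nB b b') $$ (c,c')" if "b < nB" "b' < nB" for b b'
        using rchoi_entry[of B c C c' b b' N] that c c' nB unfolding \<nu>_def nC_def nB_def by simp
      show ?thesis using e1 e2 by (intro sum.cong refl) simp
    qed
    also have "\<dots> = (1 / of_nat nA) * (1 / of_nat nB) * S"
      unfolding S_def by (simp add: sum_distrib_left mult_ac sum_divide_distrib)
    finally have R: "(of_nat (nB*nA) \<cdot>\<^sub>m ptrace_snd (nC*nA) (nB*nA) (M' * kron (1\<^sub>m (nC*nA)) (transpose_mat \<mu>))) $$ (X,Y)
       = (1 / of_nat nA) * S" using nA nB by (simp add: field_simps)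
    have "rchoi A C (N \<circ> M) $$ (X,Y) = (1 / of_nat nA) * N (M (munit nA a a')) $$ (c,c')"
      unfolding Xe Ye using rchoi_entry[of A c C c' a a' "N \<circ> M"] nA c c' a a' nA_def nC_def by simp
    also have "N (M (munit nA a a')) = mapC nB nC (choi nB nC N) (M (munit nA a a'))"
      using lin_eq_mapC[OF linN] Mc unfolding nB_def nC_def by simp
    also have "mapC nB nC (choi nB nC N) (M (munit nA a a')) $$ (c,c') = S"
      unfolding S_def mapC_def using c c' Mc
      by (auto simp: choi_def idx_lt intro!: sum.cong)
    finally show "rchoi A C (N \<circ> M) $$ (X,Y) = (of_nat (nB*nA) \<cdot>\<^sub>m ptrace_snd (nC*nA) (nB*nA) (M' * kron (1\<^sub>m (nC*nA)) (transpose_mat \<mu>))) $$ (X,Y)"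
      using R by (simp add: comp_def)
  qed (auto simp: rchoi_def choi_def nA_def nC_def)
qed


lemma CD_lin: "CD_op F A B M \<Longrightarrow> lin_map (dim A) (dim B) M"
  unfolding CD_op_def channel_def by blast
lemma CD_TP: "CD_op F A B M \<Longrightarrow> X \<in> carrier_mat (dim A) (dim A) \<Longrightarrow> mtrace (M X) = mtrace X"
  unfolding CD_op_def channel_def by blast
lemma CD_mem: "CD_op F A B M \<Longrightarrow> rchoi A B M \<in> F (B @ A)"
  unfolding CD_op_def by blast

lemma mtrace_munit: "i < d \<Longrightarrow> j < d \<Longrightarrow> mtrace (munit d i j) = (if i = j then 1 else 0)"
  unfolding mtrace_def by (simp add: if_and0 sum_if0_out)

lemma TP_ptrace: assumes B: "is_sys B" and lin: "lin_map (dim B) (dim C) N"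
  and tp: "\<And>X. X \<in> carrier_mat (dim B) (dim B) \<Longrightarrow> mtrace (N X) = mtrace X"
  shows "ptrace_fst (dim C) (dim B) (rchoi B C N) = (1 / of_nat (dim B)) \<cdot>\<^sub>m 1\<^sub>m (dim B)"
proof (rule eq_matI)
  fix b b' assume "b < dim_row ((1 / of_nat (dim B)) \<cdot>\<^sub>m (1\<^sub>m (dim B) :: complex mat))"
    "b' < dim_col ((1 / of_nat (dim B)) \<cdot>\<^sub>m (1\<^sub>m (dim B) :: complex mat))"
  then have b: "b < dim B" and b': "b' < dim B" by auto
  have c: "N (munit (dim B) b b') \<in> carrier_mat (dim C) (dim C)" using lin unfolding lin_map_def by simp
  have "ptrace_fst (dim C) (dim B) (rchoi B C N) $$ (b,b') = (\<Sum>c<dim C. rchoi B C N $$ (c*dim B + b, c*dim B + b'))"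
    unfolding ptrace_fst_def using b b' by simp
  also have "\<dots> = (\<Sum>c<dim C. (1 / of_nat (dim B)) * N (munit (dim B) b b') $$ (c,c))"
    by (intro sum.cong refl rchoi_entry) (use b b' dim_pos[OF B] in auto)
  also have "\<dots> = (1 / of_nat (dim B)) * mtrace (N (munit (dim B) b b'))"
    unfolding mtrace_def using c by (simp add: sum_distrib_left)
  also have "\<dots> = ((1 / of_nat (dim B)) \<cdot>\<^sub>m (1\<^sub>m (dim B) :: complex mat)) $$ (b,b')"
    using tp[OF munit_carrier] mtrace_munit b b' by simp
  finally show "ptrace_fst (dim C) (dim B) (rchoi B C N) $$ (b,b') = ((1 / of_nat (dim B)) \<cdot>\<^sub>m (1\<^sub>m (dim B) :: complex mat)) $$ (b,b')" .
qed auto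

lemma comp_CD: assumes F: "admissible_free_states F" and A: "is_sys A" and B: "is_sys B" and C: "is_sys C"
  and H1: "\<forall>A. is_sys A \<longrightarrow> (1 / of_nat (dim A)) \<cdot>\<^sub>m Phi (dim A) \<in> F (A @ A)"
  and H2: "\<forall>A B. is_sys A \<longrightarrow> is_sys B \<longrightarrow>
        (\<forall>\<rho>\<in>F A. \<forall>\<mu>\<in>F (B @ A).
           ptrace_fst (dim B) (dim A) \<mu> = (1 / of_nat (dim A)) \<cdot>\<^sub>m 1\<^sub>m (dim A) \<longrightarrow>
           of_nat (dim A) \<cdot>\<^sub>m
             ptrace_snd (dim B) (dim A) (\<mu> * kron (1\<^sub>m (dim B)) (transpose_mat \<rho>)) \<in> F B)"
  and CM: "CD_op F A B M" and CN: "CD_op F B C N"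
  shows "CD_op F A C (N \<circ> M)"
proof (rule CD_intro[OF F A C])
  have lM: "lin_map (dim A) (dim B) M" and lN: "lin_map (dim B) (dim C) N" using CD_lin CM CN by auto
  show "lin_map (dim A) (dim C) (N \<circ> M)"
    using lM lN unfolding lin_map_def by (auto simp: comp_def)
  show "\<forall>X\<in>carrier_mat (dim A) (dim A). mtrace ((N \<circ> M) X) = mtrace X"
    using CD_TP[OF CM] CD_TP[OF CN] lM unfolding lin_map_def by auto
  define M' where "M' = swap_mid (dim C) (dim B) (dim A) (dim A) (kron (rchoi B C N) ((1 / of_nat (dim A)) \<cdot>\<^sub>m Phi (dim A)))"
  have "kron (rchoi B C N) ((1 / of_nat (dim A)) \<cdot>\<^sub>m Phi (dim A)) \<in> F ((C @ B) @ (A @ A))"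
    by (rule adm_kron[OF F]) (use B C A CD_mem[OF CN] H1 in auto)
  then have M'F: "M' \<in> F ((C @ A) @ (B @ A))"
    using adm_swap[OF F C B A A, of "kron (rchoi B C N) ((1 / of_nat (dim A)) \<cdot>\<^sub>m Phi (dim A))"]
    unfolding M'_def by simp
  have pt: "ptrace_fst (dim (C @ A)) (dim (B @ A)) M' = (1 / of_nat (dim (B @ A))) \<cdot>\<^sub>m 1\<^sub>m (dim (B @ A))"
    unfolding M'_def dim_append
    by (rule comp_ptrace[OF rchoi_carrier dim_pos[OF A] dim_pos[OF B] TP_ptrace[OF B lN CD_TP[OF CN]]])
  have "of_nat (dim (B @ A)) \<cdot>\<^sub>m ptrace_snd (dim (C @ A)) (dim (B @ A)) (M' * kron (1\<^sub>m (dim (C @ A))) (transpose_mat (rchoi A B M))) \<in> F (C @ A)"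
    by (rule H2[rule_format]) (use A B C CD_mem[OF CM] M'F pt in auto)
  then show "rchoi A C (N \<circ> M) \<in> F (C @ A)"
    unfolding comp_rchoi[OF A B C lM lN] M'_def by simp
qed

lemma par_dims[simp]: "dim_row (par a1 a2 b1 b2 M N X) = b1*b2" "dim_col (par a1 a2 b1 b2 M N X) = b1*b2"
  unfolding par_def by simp_all

lemma par_lin: assumes "0 < dA2" shows "lin_map (dA1*dA2) (dB1*dB2) (par dA1 dA2 dB1 dB2 M N)"
  unfolding lin_map_def
proof (intro conjI ballI allI)
  fix X :: "complex mat" assume "X \<in> carrier_mat (dA1*dA2) (dA1*dA2)"
  then show "par dA1 dA2 dB1 dB2 M N X \<in> carrier_mat (dB1*dB2) (dB1*dB2)" unfolding par_def by simp
next
  fix X Y :: "complex mat" assume X: "X \<in> carrier_mat (dA1*dA2) (dA1*dA2)" and Y: "Y \<in> carrier_mat (dA1*dA2) (dA1*dA2)"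
  show "par dA1 dA2 dB1 dB2 M N (X + Y) = par dA1 dA2 dB1 dB2 M N X + par dA1 dA2 dB1 dB2 M N Y"
  proof -
    have ent: "(X + Y) $$ (i*dA2+k, j*dA2+l) = X $$ (i*dA2+k, j*dA2+l) + Y $$ (i*dA2+k, j*dA2+l)"
      if "i < dA1" "j < dA1" "k < dA2" "l < dA2" for i j k l
      using X Y idx_lt[of i dA1 k dA2] idx_lt[of j dA1 l dA2] that by simp
    have "(\<Sum>i<dA1. \<Sum>j<dA1. \<Sum>k<dA2. \<Sum>l<dA2. (X + Y) $$ (i*dA2+k, j*dA2+l) * f i j * g k l) =
      (\<Sum>i<dA1. \<Sum>j<dA1. \<Sum>k<dA2. \<Sum>l<dA2. X $$ (i*dA2+k, j*dA2+l) * f i j * g k l) +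
      (\<Sum>i<dA1. \<Sum>j<dA1. \<Sum>k<dA2. \<Sum>l<dA2. Y $$ (i*dA2+k, j*dA2+l) * f i j * g k l)" for f g
    proof -
      have "(\<Sum>i<dA1. \<Sum>j<dA1. \<Sum>k<dA2. \<Sum>l<dA2. (X + Y) $$ (i*dA2+k, j*dA2+l) * f i j * g k l) =
        (\<Sum>i<dA1. \<Sum>j<dA1. \<Sum>k<dA2. \<Sum>l<dA2. X $$ (i*dA2+k, j*dA2+l) * f i j * g k l + Y $$ (i*dA2+k, j*dA2+l) * f i j * g k l)"
        by (intro sum.cong refl) (simp add: ent distrib_right)
      then show ?thesis by (simp add: sum.distrib)
    qed
    then show ?thesis unfolding par_def by (intro eq_matI) auto
  qed
next
  fix X :: "complex mat" and c assume X: "X \<in> carrier_mat (dA1*dA2) (dA1*dA2)"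
  show "par dA1 dA2 dB1 dB2 M N (c \<cdot>\<^sub>m X) = c \<cdot>\<^sub>m par dA1 dA2 dB1 dB2 M N X"
  proof -
    have ent: "(c \<cdot>\<^sub>m X) $$ (i*dA2+k, j*dA2+l) = c * X $$ (i*dA2+k, j*dA2+l)"
      if "i < dA1" "j < dA1" "k < dA2" "l < dA2" for i j k l
      using X idx_lt[of i dA1 k dA2] idx_lt[of j dA1 l dA2] that by simp
    have "(\<Sum>i<dA1. \<Sum>j<dA1. \<Sum>k<dA2. \<Sum>l<dA2. (c \<cdot>\<^sub>m X) $$ (i*dA2+k, j*dA2+l) * f i j * g k l) =
      c * (\<Sum>i<dA1. \<Sum>j<dA1. \<Sum>k<dA2. \<Sum>l<dA2. X $$ (i*dA2+k, j*dA2+l) * f i j * g k l)" for f g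
    proof -
      have "(\<Sum>i<dA1. \<Sum>j<dA1. \<Sum>k<dA2. \<Sum>l<dA2. (c \<cdot>\<^sub>m X) $$ (i*dA2+k, j*dA2+l) * f i j * g k l) =
        (\<Sum>i<dA1. \<Sum>j<dA1. \<Sum>k<dA2. \<Sum>l<dA2. c * (X $$ (i*dA2+k, j*dA2+l) * f i j * g k l))"
        by (intro sum.cong refl) (simp add: ent mult.assoc)
      then show ?thesis by (simp add: sum_distrib_left)
    qed
    then show ?thesis unfolding par_def by (intro eq_matI) auto
  qed
qed


lemma sum_swap6: "(\<Sum>b1\<in>B1. \<Sum>b2\<in>B2. \<Sum>i\<in>I. \<Sum>j\<in>J. \<Sum>k\<in>K. \<Sum>l\<in>L. f b1 b2 i j k l) =
   (\<Sum>i\<in>I. \<Sum>j\<in>J. \<Sum>k\<in>K. \<Sum>l\<in>L. \<Sum>b1\<in>B1. \<Sum>b2\<in>B2. (f b1 b2 i j k l :: 'a::comm_monoid_add))"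
proof -
  define G where "G = (\<lambda>(b1,b2) (i,j,k,l). f b1 b2 i j k l)"
  have "(\<Sum>b1\<in>B1. \<Sum>b2\<in>B2. \<Sum>i\<in>I. \<Sum>j\<in>J. \<Sum>k\<in>K. \<Sum>l\<in>L. f b1 b2 i j k l)
     = (\<Sum>bb\<in>B1\<times>B2. \<Sum>t\<in>I\<times>J\<times>K\<times>L. G bb t)"
    by (simp only: sum.cartesian_product' G_def split)
  also have "\<dots> = (\<Sum>t\<in>I\<times>J\<times>K\<times>L. \<Sum>bb\<in>B1\<times>B2. G bb t)" by (rule sum.swap)
  also have "\<dots> = (\<Sum>i\<in>I. \<Sum>j\<in>J. \<Sum>k\<in>K. \<Sum>l\<in>L. \<Sum>b1\<in>B1. \<Sum>b2\<in>B2. f b1 b2 i j k l)"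
    by (simp only: sum.cartesian_product' G_def split)
  finally show ?thesis .
qed

lemma par_TP: assumes X: "X \<in> carrier_mat (dA1*dA2) (dA1*dA2)" and dB2: "0 < dB2"
  and cM: "\<And>i j. M (munit dA1 i j) \<in> carrier_mat dB1 dB1"
  and tM: "\<And>i j. i < dA1 \<Longrightarrow> j < dA1 \<Longrightarrow> mtrace (M (munit dA1 i j)) = (if i = j then 1 else 0)"
  and tN: "\<And>i j. i < dA2 \<Longrightarrow> j < dA2 \<Longrightarrow> mtrace (N (munit dA2 i j)) = (if i = j then 1 else 0)"
  and cN: "\<And>i j. N (munit dA2 i j) \<in> carrier_mat dB2 dB2"
  shows "mtrace (par dA1 dA2 dB1 dB2 M N X) = mtrace X"
proof -
  have "mtrace (par dA1 dA2 dB1 dB2 M N X) = (\<Sum>b1<dB1. \<Sum>b2<dB2. \<Sum>i<dA1. \<Sum>j<dA1. \<Sum>k<dA2. \<Sum>l<dA2.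
        X $$ (i*dA2+k, j*dA2+l) * M (munit dA1 i j) $$ (b1, b1) * N (munit dA2 k l) $$ (b2, b2))"
    unfolding mtrace_def par_def by (simp add: sum_split)
  also have "\<dots> = (\<Sum>i<dA1. \<Sum>j<dA1. \<Sum>k<dA2. \<Sum>l<dA2. \<Sum>b1<dB1. \<Sum>b2<dB2.
        X $$ (i*dA2+k, j*dA2+l) * M (munit dA1 i j) $$ (b1, b1) * N (munit dA2 k l) $$ (b2, b2))"
    by (rule sum_swap6)
  also have "\<dots> = (\<Sum>i<dA1. \<Sum>j<dA1. \<Sum>k<dA2. \<Sum>l<dA2.
        X $$ (i*dA2+k, j*dA2+l) * mtrace (M (munit dA1 i j)) * mtrace (N (munit dA2 k l)))"
  proof -
    have dM: "dim_row (M (munit dA1 i j)) = dB1" and dN: "dim_row (N (munit dA2 k l)) = dB2" for i j k l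
      using cM[of i j] cN[of k l] by auto
    show ?thesis unfolding mtrace_def dM dN
      by (simp add: sum_distrib_left sum_distrib_right mult.assoc sum.swap[of _ "{..<dB1}"])
  qed
  also have "\<dots> = (\<Sum>i<dA1. \<Sum>j<dA1. if i = j then (\<Sum>k<dA2. X $$ (i*dA2+k, i*dA2+k)) else 0)"
    by (intro sum.cong refl) (auto simp: tM tN if0_mult mult_if0 sum_if0_out)
  also have "\<dots> = (\<Sum>i<dA1. \<Sum>k<dA2. X $$ (i*dA2+k, i*dA2+k))"
    by simp
  also have "\<dots> = mtrace X" unfolding mtrace_def using X by (simp add: sum_split)
  finally show ?thesis .
qed


lemma par_rchoi: assumes A1: "is_sys A1" and A2: "is_sys A2" and B1: "is_sys B1" and B2: "is_sys B2"
  and cM: "\<And>i j. M (munit (dim A1) i j) \<in> carrier_mat (dim B1) (dim B1)"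
  and cN: "\<And>i j. N (munit (dim A2) i j) \<in> carrier_mat (dim B2) (dim B2)"
  shows "rchoi (A1 @ A2) (B1 @ B2) (par (dim A1) (dim A2) (dim B1) (dim B2) M N) =
    swap_mid (dim B1) (dim A1) (dim B2) (dim A2) (kron (rchoi A1 B1 M) (rchoi A2 B2 N))"
proof -
  define a1 where "a1 = dim A1"
  define a2 where "a2 = dim A2"
  define b1 where "b1 = dim B1"
  define b2 where "b2 = dim B2"
  have pa1: "0 < a1" and pa2: "0 < a2" and pb1: "0 < b1" and pb2: "0 < b2"
    using dim_pos A1 A2 B1 B2 a1_def a2_def b1_def b2_def by auto
  have pa: "0 < a1*a2" and pb: "0 < b1*b2" using pa1 pa2 pb1 pb2 by auto
  have m1: "rchoi A1 B1 M \<in> carrier_mat (b1*a1) (b1*a1)" unfolding a1_def b1_def by (rule rchoi_carrier)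
  have m2: "rchoi A2 B2 N \<in> carrier_mat (b2*a2) (b2*a2)" unfolding a2_def b2_def by (rule rchoi_carrier)
  show ?thesis unfolding a1_def[symmetric] a2_def[symmetric] b1_def[symmetric] b2_def[symmetric]
  proof (rule eq_matI)
    fix R S assume "R < dim_row (swap_mid b1 a1 b2 a2 (kron (rchoi A1 B1 M) (rchoi A2 B2 N)))"
      "S < dim_col (swap_mid b1 a1 b2 a2 (kron (rchoi A1 B1 M) (rchoi A2 B2 N)))"
    then have R: "R < (b1*b2)*(a1*a2)" and S: "S < (b1*b2)*(a1*a2)" by (auto simp: swap_mid_def mult_ac)
    obtain y x where y: "y < b1*b2" and x: "x < a1*a2" and Re: "R = y*(a1*a2) + x" using decomp2[OF R pa] .
    obtain y1 y2 where y1: "y1 < b1" and y2: "y2 < b2" and ye: "y = y1*b2 + y2" using decomp2[OF y pb2] .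
    obtain x1 x2 where x1: "x1 < a1" and x2: "x2 < a2" and xe: "x = x1*a2 + x2" using decomp2[OF x pa2] .
    obtain y' x' where y': "y' < b1*b2" and x': "x' < a1*a2" and Se: "S = y'*(a1*a2) + x'" using decomp2[OF S pa] .
    obtain y1' y2' where y1': "y1' < b1" and y2': "y2' < b2" and ye': "y' = y1'*b2 + y2'" using decomp2[OF y' pb2] .
    obtain x1' x2' where x1': "x1' < a1" and x2': "x2' < a2" and xe': "x' = x1'*a2 + x2'" using decomp2[OF x' pa2] .
    have Rf: "R = ((y1*b2 + y2)*a1 + x1)*a2 + x2" unfolding Re ye xe by (simp add: algebra_simps)
    have Sf: "S = ((y1'*b2 + y2')*a1 + x1')*a2 + x2'" unfolding Se ye' xe' by (simp add: algebra_simps)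
    have R4: "R < b1*b2*a1*a2" and S4: "S < b1*b2*a1*a2" using R S by (simp_all add: mult_ac)
    have e: "((y1*a1 + x1)*b2 + y2)*a2 + x2 = (y1*a1 + x1)*(b2*a2) + (y2*a2 + x2)" for y1 x1 y2 x2 :: nat
      by (simp add: algebra_simps)
    have "swap_mid b1 a1 b2 a2 (kron (rchoi A1 B1 M) (rchoi A2 B2 N)) $$ (R,S)
      = kron (rchoi A1 B1 M) (rchoi A2 B2 N) $$ ((y1*a1 + x1)*(b2*a2) + (y2*a2 + x2), (y1'*a1 + x1')*(b2*a2) + (y2'*a2 + x2'))"
      unfolding swap_mid_entry[OF R4 S4] unfolding Rf Sf
      unfolding swap_idx_eq[OF x1 y2 x2] swap_idx_eq[OF x1' y2' x2'] e ..
    also have "\<dots> = rchoi A1 B1 M $$ (y1*a1 + x1, y1'*a1 + x1') * rchoi A2 B2 N $$ (y2*a2 + x2, y2'*a2 + x2')"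
      by (rule kron_entry[OF m1 m2]) (use idx_lt y1 x1 y1' x1' y2 x2 y2' x2' in auto)
    also have "\<dots> = ((1 / of_nat a1) * M (munit a1 x1 x1') $$ (y1,y1')) * ((1 / of_nat a2) * N (munit a2 x2 x2') $$ (y2,y2'))"
      unfolding a1_def a2_def b1_def b2_def
      by (subst rchoi_entry, (use dim_pos[OF A1] y1 x1 y1' x1' a1_def b1_def in auto)[5],
          subst rchoi_entry, (use dim_pos[OF A2] y2 x2 y2' x2' a2_def b2_def in auto)[5], rule refl)
    also have "\<dots> = rchoi (A1 @ A2) (B1 @ B2) (par a1 a2 b1 b2 M N) $$ (R,S)"
    proof -
      have "rchoi (A1 @ A2) (B1 @ B2) (par a1 a2 b1 b2 M N) $$ (R,S) =
          (1 / of_nat (a1*a2)) * par a1 a2 b1 b2 M N (munit (a1*a2) x x') $$ (y, y')"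
        unfolding rchoi_def choi_def dim_append a1_def[symmetric] a2_def[symmetric] b1_def[symmetric] b2_def[symmetric] Re Se
        using R[unfolded Re] S[unfolded Se] x x' by simp
      also have "par a1 a2 b1 b2 M N (munit (a1*a2) x x') $$ (y, y') =
          (\<Sum>i<a1. \<Sum>j<a1. \<Sum>k<a2. \<Sum>l<a2. (if i = x1 \<and> k = x2 \<and> j = x1' \<and> l = x2' then 1 else 0) *
             M (munit a1 i j) $$ (y1, y1') * N (munit a2 k l) $$ (y2, y2'))"
        unfolding par_def using y y' ye ye' y2 y2' xe xe' x2 x2'
        by (auto intro!: sum.cong simp: idx_lt)
      also have "\<dots> = M (munit a1 x1 x1') $$ (y1,y1') * N (munit a2 x2 x2') $$ (y2,y2')"
        using x1 x2 x1' x2' by (simp add: if_and0 if0_mult sum_if0_out)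
      finally show ?thesis using pa1 pa2 by simp
    qed
    finally show "rchoi (A1 @ A2) (B1 @ B2) (par a1 a2 b1 b2 M N) $$ (R,S) =
       swap_mid b1 a1 b2 a2 (kron (rchoi A1 B1 M) (rchoi A2 B2 N)) $$ (R,S)" by simp
  qed (auto simp: rchoi_def choi_def swap_mid_def a1_def a2_def b1_def b2_def mult_ac)
qed


lemma par_CD: assumes F: "admissible_free_states F" and A1: "is_sys A1" and A2: "is_sys A2"
  and B1: "is_sys B1" and B2: "is_sys B2" and CM: "CD_op F A1 B1 M" and CN: "CD_op F A2 B2 N"
  shows "CD_op F (A1 @ A2) (B1 @ B2) (par (dim A1) (dim A2) (dim B1) (dim B2) M N)"
proof (rule CD_intro[OF F])
  show "is_sys (A1 @ A2)" "is_sys (B1 @ B2)" using A1 A2 B1 B2 by auto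
  have lM: "lin_map (dim A1) (dim B1) M" and lN: "lin_map (dim A2) (dim B2) N" using CD_lin CM CN by auto
  have cM: "\<And>i j. M (munit (dim A1) i j) \<in> carrier_mat (dim B1) (dim B1)" using lM unfolding lin_map_def by simp
  have cN: "\<And>i j. N (munit (dim A2) i j) \<in> carrier_mat (dim B2) (dim B2)" using lN unfolding lin_map_def by simp
  show "lin_map (dim (A1 @ A2)) (dim (B1 @ B2)) (par (dim A1) (dim A2) (dim B1) (dim B2) M N)"
    using par_lin[OF dim_pos[OF A2]] by simp
  show "\<forall>X\<in>carrier_mat (dim (A1 @ A2)) (dim (A1 @ A2)). mtrace (par (dim A1) (dim A2) (dim B1) (dim B2) M N X) = mtrace X"
  proof
    fix X :: "complex mat" assume "X \<in> carrier_mat (dim (A1 @ A2)) (dim (A1 @ A2))"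
    then have X: "X \<in> carrier_mat (dim A1 * dim A2) (dim A1 * dim A2)" by simp
    have tM: "\<And>i j. i < dim A1 \<Longrightarrow> j < dim A1 \<Longrightarrow> mtrace (M (munit (dim A1) i j)) = (if i = j then 1 else 0)"
      using CD_TP[OF CM] mtrace_munit by simp
    have tN: "\<And>i j. i < dim A2 \<Longrightarrow> j < dim A2 \<Longrightarrow> mtrace (N (munit (dim A2) i j)) = (if i = j then 1 else 0)"
      using CD_TP[OF CN] mtrace_munit by simp
    show "mtrace (par (dim A1) (dim A2) (dim B1) (dim B2) M N X) = mtrace X"
      using par_TP[of X "dim A1" "dim A2" "dim B2" M "dim B1" N] X dim_pos[OF B2] cM tM tN cN
      by blast
  qed
  have "kron (rchoi A1 B1 M) (rchoi A2 B2 N) \<in> F ((B1 @ A1) @ (B2 @ A2))"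
    by (rule adm_kron[OF F]) (use A1 A2 B1 B2 CD_mem[OF CM] CD_mem[OF CN] in auto)
  then have "swap_mid (dim B1) (dim A1) (dim B2) (dim A2) (kron (rchoi A1 B1 M) (rchoi A2 B2 N)) \<in> F (B1 @ B2 @ A1 @ A2)"
    using adm_swap[OF F B1 A1 B2 A2] by simp
  then show "rchoi (A1 @ A2) (B1 @ B2) (par (dim A1) (dim A2) (dim B1) (dim B2) M N) \<in> F ((B1 @ B2) @ A1 @ A2)"
    unfolding par_rchoi[where M=M and N=N, OF A1 A2 B1 B2 cM cN] by simp
qed

theorem theorem1:
  fixes F :: free_states
  assumes "admissible_free_states F"
  shows "CD_resource_theory F \<longleftrightarrow>
    ((\<forall>A. is_sys A \<longrightarrow> (1 / of_nat (dim A)) \<cdot>\<^sub>m Phi (dim A) \<in> F (A @ A)) \<and>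
     (\<forall>A B. is_sys A \<longrightarrow> is_sys B \<longrightarrow>
        (\<forall>\<rho>\<in>F A. \<forall>\<mu>\<in>F (B @ A).
           ptrace_fst (dim B) (dim A) \<mu> = (1 / of_nat (dim A)) \<cdot>\<^sub>m 1\<^sub>m (dim A) \<longrightarrow>
           of_nat (dim A) \<cdot>\<^sub>m
             ptrace_snd (dim B) (dim A) (\<mu> * kron (1\<^sub>m (dim B)) (transpose_mat \<rho>)) \<in> F B)))"
proof
  assume "CD_resource_theory F"
  then show "(\<forall>A. is_sys A \<longrightarrow> (1 / of_nat (dim A)) \<cdot>\<^sub>m Phi (dim A) \<in> F (A @ A)) \<and>
     (\<forall>A B. is_sys A \<longrightarrow> is_sys B \<longrightarrow>
        (\<forall>\<rho>\<in>F A. \<forall>\<mu>\<in>F (B @ A).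
           ptrace_fst (dim B) (dim A) \<mu> = (1 / of_nat (dim A)) \<cdot>\<^sub>m 1\<^sub>m (dim A) \<longrightarrow>
           of_nat (dim A) \<cdot>\<^sub>m
             ptrace_snd (dim B) (dim A) (\<mu> * kron (1\<^sub>m (dim B)) (transpose_mat \<rho>)) \<in> F B))"
    using forward[OF assms] by blast
next
  assume H: "(\<forall>A. is_sys A \<longrightarrow> (1 / of_nat (dim A)) \<cdot>\<^sub>m Phi (dim A) \<in> F (A @ A)) \<and>
     (\<forall>A B. is_sys A \<longrightarrow> is_sys B \<longrightarrow>
        (\<forall>\<rho>\<in>F A. \<forall>\<mu>\<in>F (B @ A).
           ptrace_fst (dim B) (dim A) \<mu> = (1 / of_nat (dim A)) \<cdot>\<^sub>m 1\<^sub>m (dim A) \<longrightarrow>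
           of_nat (dim A) \<cdot>\<^sub>m
             ptrace_snd (dim B) (dim A) (\<mu> * kron (1\<^sub>m (dim B)) (transpose_mat \<rho>)) \<in> F B))"
  then have H1: "\<forall>A. is_sys A \<longrightarrow> (1 / of_nat (dim A)) \<cdot>\<^sub>m Phi (dim A) \<in> F (A @ A)"
    and H2: "\<forall>A B. is_sys A \<longrightarrow> is_sys B \<longrightarrow>
        (\<forall>\<rho>\<in>F A. \<forall>\<mu>\<in>F (B @ A).
           ptrace_fst (dim B) (dim A) \<mu> = (1 / of_nat (dim A)) \<cdot>\<^sub>m 1\<^sub>m (dim A) \<longrightarrow>
           of_nat (dim A) \<cdot>\<^sub>m
             ptrace_snd (dim B) (dim A) (\<mu> * kron (1\<^sub>m (dim B)) (transpose_mat \<rho>)) \<in> F B)" by blast+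
  show "CD_resource_theory F" unfolding CD_resource_theory_def
  proof (intro conjI allI impI)
    fix A assume A: "is_sys A"
    show "CD_op F A A (\<lambda>X. X)" using id_CD[OF assms A] H1 A by blast
  next
    fix A B assume A: "is_sys A" and B: "is_sys B"
    have "is_sys (A @ B)" using A B by simp
    then show "CD_op F (A @ B) (B @ A) (swap_mat (dim A) (dim B))"
      using swap_CD[OF assms A B] H1 by blast
  next
    fix A B assume A: "is_sys A" and B: "is_sys B"
    show "CD_op F (A @ B) A (ptrace_snd (dim A) (dim B))" by (rule discard_CD[OF assms A B H1])
  next
    fix A B C M N assume "is_sys A" "is_sys B" "is_sys C" "CD_op F A B M" "CD_op F B C N"
    then show "CD_op F A C (N \<circ> M)" using comp_CD[OF assms _ _ _ H1 H2] by blast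
  next
    fix A1 A2 B1 B2 M N assume "is_sys A1" "is_sys A2" "is_sys B1" "is_sys B2" "CD_op F A1 B1 M" "CD_op F A2 B2 N"
    then show "CD_op F (A1 @ A2) (B1 @ B2) (par (dim A1) (dim A2) (dim B1) (dim B2) M N)"
      using par_CD[OF assms] by blast
  qed
qed

end
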